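(* For $n,m\ge 0$ let $f(n,m)$ be the number of linked cycles on $[n]$ with exactly $m$ singly covered minimal elements. Then $f(1,1)=1$, $f(n,0)=0$ for $n\ge1$, $f(n,m)=0$ if $n<m$, and for all $n\ge2$, $m\ge1$, $$f(n,m)=m\,f(n,m+1)+f(n-1,m-1).$$
   Context: Two finite sets of integers $E,F$ are nearly disjoint if for every $i\in E\cap F$ either ($i=\min(E)$, $|E|>1$, $i\ne\min(F)$) or ($i=\min(F)$, $|F|>1$, $i\ne\min(E)$). A linked partition of $[n]$ is a set of nonempty subsets (blocks) of $[n]$ with union $[n]$, any two distinct blocks nearly disjoint; each element lies in one or two blocks (singly/doubly covered). A singly covered minimal element is a singly covered element that is the minimum of its block. A linked cycle on $[n]$ is a linked partition of $[n]$ together with a cyclic arrangement of the elements of each block. *)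

theory Defs
  imports "HOL-Combinatorics.Permutations"
begin

definition nearly_disjoint :: "nat set \<Rightarrow> nat set \<Rightarrow> bool" where
  "nearly_disjoint E F \<longleftrightarrow>
     (\<forall>i \<in> E \<inter> F. (i = Min E \<and> card E > 1 \<and> i \<noteq> Min F)
                   \<or> (i = Min F \<and> card F > 1 \<and> i \<noteq> Min E))"

definition linked_partition :: "nat \<Rightarrow> nat set set \<Rightarrow> bool" where
  "linked_partition n P \<longleftrightarrow>
     (\<forall>B \<in> P. B \<noteq> {} \<and> B \<subseteq> {1..n}) \<and> \<Union>P = {1..n} \<and>
     (\<forall>E \<in> P. \<forall>F \<in> P. E \<noteq> F \<longrightarrow> nearly_disjoint E F)"

definition singly_covered_minimal :: "nat set set \<Rightarrow> nat set" where
  "singly_covered_minimal P =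
     {i. \<exists>B \<in> P. i = Min B \<and> (\<forall>B' \<in> P. i \<in> B' \<longrightarrow> B' = B)}"

definition cyclic_arrangement :: "nat set \<Rightarrow> (nat \<Rightarrow> nat) \<Rightarrow> bool" where
  "cyclic_arrangement B \<sigma> \<longleftrightarrow>
     \<sigma> permutes B \<and> (\<forall>x \<in> B. \<forall>y \<in> B. \<exists>k. (\<sigma> ^^ k) x = y)"

definition linked_cycle :: "nat \<Rightarrow> (nat set \<times> (nat \<Rightarrow> nat)) set \<Rightarrow> bool" where
  "linked_cycle n C \<longleftrightarrow>
     linked_partition n (fst ` C) \<and> inj_on fst C \<and>
     (\<forall>(B, \<sigma>) \<in> C. cyclic_arrangement B \<sigma>)"

definition f_lc :: "nat \<Rightarrow> nat \<Rightarrow> nat" where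
  "f_lc n m = card {C. linked_cycle n C \<and> card (singly_covered_minimal (fst ` C)) = m}"

end

theory Submission
  imports Defs Complex_Main
begin


definition reach :: "(nat \<Rightarrow> nat) \<Rightarrow> nat \<Rightarrow> nat \<Rightarrow> bool" where
  "reach s y z \<longleftrightarrow> (\<exists>k. (s ^^ k) y = z)"

lemma reach_refl: "reach s y y"
  unfolding reach_def by (rule exI[of _ 0]) simp

lemma reach_step: "reach s y (s y)"
  unfolding reach_def by (rule exI[of _ 1]) simp

lemma reach_trans: "reach s x y \<Longrightarrow> reach s y z \<Longrightarrow> reach s x z"
  unfolding reach_def by (metis funpow_add o_apply)

lemma cyc_reach: "cyclic_arrangement B s \<longleftrightarrow> s permutes B \<and> (\<forall>x\<in>B. \<forall>y\<in>B. reach s x y)"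
  unfolding cyclic_arrangement_def reach_def by simp

lemma cyc_ins:
  assumes c: "cyclic_arrangement B s" and n: "n \<notin> B" and x: "x \<in> B"
  shows "cyclic_arrangement (insert n B) (s \<circ> transpose x n)"
proof -
  have p: "s permutes B" using c by (simp add: cyc_reach)
  have sn: "s n = n" using p n by (simp add: permutes_not_in)
  let ?t = "s \<circ> transpose x n"
  have pt: "?t permutes insert n B"
    by (rule permutes_compose[OF permutes_swap_id]) (use x permutes_subset[OF p] in auto)
  have st: "reach ?t u (s u)" if "u \<in> B" for u
  proof (cases "u = x")
    case True
    have "?t u = n" using True sn by simp
    moreover have "?t n = s x" by simp
    ultimately show ?thesis using True reach_step[of ?t u] reach_step[of ?t n] reach_trans by metis
  next
    case False
    then have "?t u = s u" using that n by (auto simp: transpose_def)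
    then show ?thesis using reach_step[of ?t u] by simp
  qed
  have sk: "reach ?t u ((s ^^ k) u)" if "u \<in> B" for u k
  proof (induction k)
    case 0 then show ?case by (simp add: reach_refl)
  next
    case (Suc k)
    have "(s ^^ k) u \<in> B" using that p
      by (induction k) (auto simp: permutes_in_image)
    then have "reach ?t ((s ^^ k) u) (s ((s ^^ k) u))" by (rule st)
    from reach_trans[OF Suc.IH this] show ?case by (simp add: comp_def)
  qed
  have rB: "reach ?t u v" if "u \<in> B" "v \<in> B" for u v
    using c that sk unfolding cyclic_arrangement_def by metis
  have xn: "reach ?t x n" using reach_step[of ?t x] sn by simp
  have nx: "reach ?t n (s x)" using reach_step[of ?t n] by simp
  have sxB: "s x \<in> B" using p x by (simp add: permutes_in_image)
  show ?thesis unfolding cyc_reach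
  proof (intro conjI pt ballI)
    fix u v assume u: "u \<in> insert n B" and v: "v \<in> insert n B"
    show "reach ?t u v"
    proof (cases "u = n")
      case True
      show ?thesis
      proof (cases "v = n")
        case True with \<open>u = n\<close> show ?thesis by (simp add: reach_refl)
      next
        case False then have "v \<in> B" using v by auto
        then show ?thesis using True nx rB sxB reach_trans by metis
      qed
    next
      case False then have uB: "u \<in> B" using u by auto
      show ?thesis
      proof (cases "v = n")
        case True then show ?thesis using uB x rB xn reach_trans by metis
      next
        case False then have "v \<in> B" using v by auto
        then show ?thesis using uB rB by metis
      qed
    qed
  qed
qed

lemma funpow_in: "s permutes B \<Longrightarrow> u \<in> B \<Longrightarrow> (s ^^ k) u \<in> B"
  by (induction k) (auto simp: permutes_in_image)

lemma cyc_rem: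
  assumes c: "cyclic_arrangement (insert n B) t" and n: "n \<notin> B" and ne: "B \<noteq> {}"
  shows "cyclic_arrangement B (transpose n (t n) \<circ> t)" and "inv t n \<in> B"
    and "(transpose n (t n) \<circ> t) \<circ> transpose (inv t n) n = t"
proof -
  let ?s = "transpose n (t n) \<circ> t"
  define x where "x = inv t n"
  have pt: "t permutes insert n B" using c by (simp add: cyc_reach)
  have ps: "?s permutes B" using permutes_insert_lemma[OF pt] .
  obtain b where b: "b \<in> B" using ne by auto
  have tn: "t n \<noteq> n"
  proof
    assume "t n = n"
    then have "(t ^^ k) n = n" for k by (induction k) auto
    moreover obtain k where "(t ^^ k) n = b" using c b unfolding cyclic_arrangement_def by auto
    ultimately show False using b n by auto
  qed
  have tx: "t x = n" unfolding x_def using pt by (simp add: permutes_inverses)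
  have xn: "x \<noteq> n" using tx tn by auto
  have xB: "x \<in> B"
  proof -
    have "x \<in> insert n B" using tx pt by (metis insertI1 permutes_in_image)
    then show ?thesis using xn by auto
  qed
  then show "inv t n \<in> B" by (simp add: x_def)
  have injt: "inj t" using pt by (rule permutes_inj)
  have sv: "?s u = t u" if "u \<noteq> x" "u \<noteq> n" for u
  proof -
    have "t u \<noteq> n" using that tx injt by (metis injD)
    moreover have "t u \<noteq> t n" using that injt by (metis injD)
    ultimately show ?thesis by (simp add: transpose_def)
  qed
  have sx: "?s x = t n" using tx by simp
  show "?s \<circ> transpose (inv t n) n = t"
  proof
    fix u
    have "(?s \<circ> transpose x n) u = t u"
    proof (cases "u = x")
      case True then show ?thesis using tx by simp
    next
      case False
      show ?thesis
      proof (cases "u = n")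
        case True then show ?thesis using sx xn by simp
      next
        case False
        then have "transpose x n u = u" using \<open>u \<noteq> x\<close> by (simp add: transpose_def)
        then show ?thesis using sv[OF \<open>u \<noteq> x\<close> False] by simp
      qed
    qed
    then show "(?s \<circ> transpose (inv t n) n) u = t u" by (simp add: x_def)
  qed
  have key: "\<forall>y\<in>B. (t ^^ k) y \<in> B \<longrightarrow> reach ?s y ((t ^^ k) y)" for k
  proof (induction k rule: nat_less_induct)
    case (1 k)
    show ?case
    proof (intro ballI impI)
      fix y assume y: "y \<in> B" and tk: "(t ^^ k) y \<in> B"
      show "reach ?s y ((t ^^ k) y)"
      proof (cases k)
        case 0 then show ?thesis by (simp add: reach_refl)
      next
        case (Suc k')
        define w where "w = (t ^^ k') y"
        have w_ins: "w \<in> insert n B" unfolding w_def using funpow_in[OF pt] y by auto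
        have tkw: "(t ^^ k) y = t w" using Suc w_def by simp
        show ?thesis
        proof (cases "w \<in> B")
          case True
          then have r1: "reach ?s y w" using 1 Suc y w_def by (simp add: comp_def)
          have "w \<noteq> n" using True n by auto
          moreover have "w \<noteq> x" using tk tkw tx n by auto
          ultimately have "?s w = t w" using sv by auto
          then show ?thesis using reach_trans[OF r1 reach_step[of ?s w]] tkw by simp
        next
          case False
          then have wn: "w = n" using w_ins by auto
          have "k' \<noteq> 0"
          proof
            assume "k' = 0"
            then have "w = y" using w_def by simp
            then show False using wn y n by simp
          qed
          then obtain k'' where k'': "k' = Suc k''" by (cases k') auto
          define v where "v = (t ^^ k'') y"
          have "t v = n" using wn w_def k'' v_def by simp
          then have vx: "v = x" using tx injt by (metis injD)
          have "k'' < k" using Suc k'' by simp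
          then have "\<forall>y\<in>B. (t ^^ k'') y \<in> B \<longrightarrow> reach ?s y ((t ^^ k'') y)" using 1 by blast
          then have "(t ^^ k'') y \<in> B \<longrightarrow> reach ?s y ((t ^^ k'') y)" using y by blast
          then have r1: "reach ?s y x" using xB vx v_def by simp
          have "(t ^^ k) y = ?s x" using sx tkw wn by simp
          then show ?thesis using reach_trans[OF r1 reach_step[of ?s x]] by simp
        qed
      qed
    qed
  qed
  show "cyclic_arrangement B ?s" unfolding cyc_reach
  proof (intro conjI ps ballI)
    fix y z assume y: "y \<in> B" and z: "z \<in> B"
    have "y \<in> insert n B" "z \<in> insert n B" using y z by auto
    then obtain k where "(t ^^ k) y = z" using c unfolding cyclic_arrangement_def by blast
    then show "reach ?s y z" using key[of k] y z by auto
  qed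
qed

lemma cyc_single: "cyclic_arrangement {a} s \<longleftrightarrow> s = id"
proof
  assume "cyclic_arrangement {a} s"
  then have "s permutes {a}" by (simp add: cyclic_arrangement_def)
  then show "s = id" by simp
next
  assume sid: "s = id"
  have "\<forall>x\<in>{a}. \<forall>y\<in>{a}. \<exists>k. (s ^^ k) x = y"
  proof (intro ballI)
    fix x y assume "x \<in> {a}" "y \<in> {a}"
    then have "(s ^^ 0) x = y" by simp
    then show "\<exists>k. (s ^^ k) x = y" by blast
  qed
  then show "cyclic_arrangement {a} s"
    unfolding cyclic_arrangement_def using sid by simp
qed

lemma cyc_pair:
  assumes an: "a \<noteq> n" and c0: "cyclic_arrangement {a, n} t"
  shows "t = transpose a n"
proof -
  have c: "cyclic_arrangement (insert n {a}) t" using c0 by (metis insert_commute)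
  have nn: "n \<notin> {a}" using an by auto
  have r1: "cyclic_arrangement {a} (transpose n (t n) \<circ> t)" by (rule cyc_rem(1)[OF c nn]) simp
  have r2: "inv t n \<in> {a}" by (rule cyc_rem(2)[OF c nn]) simp
  have r3: "(transpose n (t n) \<circ> t) \<circ> transpose (inv t n) n = t" by (rule cyc_rem(3)[OF c nn]) simp
  have "inv t n = a" using r2 by simp
  moreover have "transpose n (t n) \<circ> t = id" using r1 cyc_single by blast
  ultimately show ?thesis using r3 by simp
qed




lemma nd_sym: "nearly_disjoint E F = nearly_disjoint F E"
  unfolding nearly_disjoint_def by blast

lemma lp_block:
  assumes "linked_partition n P" "B \<in> P"
  shows "B \<noteq> {}" "B \<subseteq> {1..n}" "finite B" "Min B \<in> B"
proof -
  show "B \<noteq> {}" "B \<subseteq> {1..n}" using assms unfolding linked_partition_def by auto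
  then show "finite B" using finite_subset by blast
  then show "Min B \<in> B" using \<open>B \<noteq> {}\<close> by simp
qed

lemma lp_share:
  assumes "linked_partition n P" "E \<in> P" "F \<in> P" "E \<noteq> F" "i \<in> E" "i \<in> F"
  shows "(i = Min E \<and> card E > 1 \<and> i \<noteq> Min F) \<or> (i = Min F \<and> card F > 1 \<and> i \<noteq> Min E)"
proof -
  have "nearly_disjoint E F" using assms(1-4) unfolding linked_partition_def by blast
  then show ?thesis using assms(5,6) unfolding nearly_disjoint_def by blast
qed

lemma lp_nd:
  assumes "linked_partition n P" "E \<in> P" "F \<in> P" "E \<noteq> F"
  shows "nearly_disjoint E F"
  using assms unfolding linked_partition_def by blast

lemma lp_three:
  assumes "linked_partition n P" "E \<in> P" "F \<in> P" "G \<in> P" "E \<noteq> F" "E \<noteq> G" "F \<noteq> G"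
    "i \<in> E" "i \<in> F" "i \<in> G"
  shows False
proof -
  have 1: "(i = Min E) \<noteq> (i = Min F)" using lp_share[OF assms(1,2,3,5,8,9)] by blast
  have 2: "(i = Min E) \<noteq> (i = Min G)" using lp_share[OF assms(1,2,4,6,8,10)] by blast
  have 3: "(i = Min F) \<noteq> (i = Min G)" using lp_share[OF assms(1,3,4,7,9,10)] by blast
  show False using 1 2 3 by argo
qed

lemma lp_top:
  assumes "linked_partition n P" "E \<in> P" "F \<in> P" "n \<in> E" "n \<in> F"
  shows "E = F"
proof (rule ccontr)
  assume ne: "E \<noteq> F"
  have sub: "X \<subseteq> {n}" if "X \<in> P" "n = Min X" for X
  proof
    fix y assume "y \<in> X"
    have "y \<le> n" using lp_block(2)[OF assms(1) that(1)] \<open>y \<in> X\<close> by auto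
    moreover have "Min X \<le> y" using Min_le[OF lp_block(3)[OF assms(1) that(1)] \<open>y \<in> X\<close>] .
    ultimately show "y \<in> {n}" using that(2) by simp
  qed
  have c1: "card X \<le> 1" if "X \<in> P" "n = Min X" for X
    using card_mono[OF _ sub[OF that]] by simp
  have "(n = Min E \<and> 1 < card E) \<or> (n = Min F \<and> 1 < card F)"
    using lp_share[OF assms(1,2,3) ne assms(4,5)] by blast
  then show False using c1[OF assms(2)] c1[OF assms(3)] by linarith
qed

lemma scm_sub:
  assumes "linked_partition n P"
  shows "singly_covered_minimal P \<subseteq> {1..n}"
proof
  fix x assume "x \<in> singly_covered_minimal P"
  then obtain B where "B \<in> P" "x = Min B" unfolding singly_covered_minimal_def by blast
  then show "x \<in> {1..n}" using lp_block(2,4)[OF assms \<open>B \<in> P\<close>] by auto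
qed

lemma lc_parts:
  assumes "linked_cycle n C"
  shows "linked_partition n (fst ` C)" "inj_on fst C" "\<And>B s. (B, s) \<in> C \<Longrightarrow> cyclic_arrangement B s"
  using assms unfolding linked_cycle_def by auto

lemma lc_intro:
  assumes "linked_partition n (fst ` C)" "inj_on fst C" "\<And>B s. (B, s) \<in> C \<Longrightarrow> cyclic_arrangement B s"
  shows "linked_cycle n C"
  using assms unfolding linked_cycle_def by auto

lemma addS_valid:
  assumes lc: "linked_cycle N C"
  shows "linked_cycle (Suc N) (insert ({Suc N}, id) C)"
    and "singly_covered_minimal (fst ` insert ({Suc N}, id) C) = insert (Suc N) (singly_covered_minimal (fst ` C))"
    and "Suc N \<notin> singly_covered_minimal (fst ` C)"
proof -
  let ?n = "Suc N"
  let ?P = "fst ` C"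
  have lp: "linked_partition N ?P" using lc_parts[OF lc] by simp
  have sub: "B \<subseteq> {1..N}" if "B \<in> ?P" for B using lp_block[OF lp that] by simp
  have nP: "?n \<notin> B" if "B \<in> ?P" for B using sub[OF that] by auto
  have "linked_partition ?n (insert {?n} ?P)"
    unfolding linked_partition_def
  proof (intro conjI ballI impI)
    fix B assume "B \<in> insert {?n} ?P"
    then show "B \<noteq> {}" "B \<subseteq> {1..?n}" using lp_block[OF lp] sub by fastforce+
  next
    have "\<Union>?P = {1..N}" using lp unfolding linked_partition_def by simp
    then show "\<Union>(insert {?n} ?P) = {1..?n}" by auto
  next
    fix E F assume E: "E \<in> insert {?n} ?P" and F: "F \<in> insert {?n} ?P" and EF: "E \<noteq> F"
    show "nearly_disjoint E F"
    proof (cases "E = {?n} \<or> F = {?n}")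
      case True
      then have "E \<inter> F = {}" using E F EF nP by auto
      then show ?thesis unfolding nearly_disjoint_def by auto
    next
      case False
      then have "E \<in> ?P" "F \<in> ?P" using E F by auto
      then show ?thesis using lp_nd[OF lp _ _ EF] by blast
    qed
  qed
  then show "linked_cycle ?n (insert ({?n}, id) C)"
  proof (intro lc_intro)
    show "inj_on fst (insert ({?n}, id) C)" using lc_parts(2)[OF lc] nP by auto
  next
    fix B s assume "(B, s) \<in> insert ({?n}, id) C"
    then show "cyclic_arrangement B s" using lc_parts(3)[OF lc] cyc_single by auto
  qed simp
  show nscm: "?n \<notin> singly_covered_minimal ?P"
    using scm_sub[OF lp] by auto
  show "singly_covered_minimal (fst ` insert ({?n}, id) C) = insert ?n (singly_covered_minimal ?P)"
  proof (intro equalityI subsetI)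
    fix x assume "x \<in> singly_covered_minimal (fst ` insert ({?n}, id) C)"
    then have "x \<in> singly_covered_minimal (insert {?n} ?P)" by simp
    then obtain B where B: "B \<in> insert {?n} ?P" "x = Min B" "\<forall>B'\<in>insert {?n} ?P. x \<in> B' \<longrightarrow> B' = B"
      unfolding singly_covered_minimal_def by blast
    then show "x \<in> insert ?n (singly_covered_minimal ?P)"
      unfolding singly_covered_minimal_def by auto
  next
    fix x assume x: "x \<in> insert ?n (singly_covered_minimal ?P)"
    show "x \<in> singly_covered_minimal (fst ` insert ({?n}, id) C)"
    proof (cases "x = ?n")
      case True
      then show ?thesis unfolding singly_covered_minimal_def using nP by (auto intro!: bexI[of _ "{?n}"])
    next
      case False
      then obtain B where B: "B \<in> ?P" "x = Min B" "\<forall>B'\<in>?P. x \<in> B' \<longrightarrow> B' = B"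
        using x unfolding singly_covered_minimal_def by auto
      then show ?thesis unfolding singly_covered_minimal_def using False by (auto intro!: bexI[of _ B])
    qed
  qed
qed

definition Sn :: "nat set set \<Rightarrow> nat set" where
  "Sn P = {a. \<exists>B\<in>P. a \<in> B \<and> a \<noteq> Min B \<and> (\<forall>B'\<in>P. a \<in> B' \<longrightarrow> B' = B)}"

lemma nd_ins:
  assumes "nearly_disjoint B F" "n \<notin> F" "finite B" "B \<noteq> {}" "Min (insert n B) = Min B"
  shows "nearly_disjoint (insert n B) F"
  unfolding nearly_disjoint_def
proof
  fix i assume i: "i \<in> insert n B \<inter> F"
  then have iB: "i \<in> B \<inter> F" using assms(2) by auto
  have "card (insert n B) > 1" if "card B > 1"
    using that assms(3) by (simp add: card_insert_if)
  then show "(i = Min (insert n B) \<and> 1 < card (insert n B) \<and> i \<noteq> Min F) \<or>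
        (i = Min F \<and> 1 < card F \<and> i \<noteq> Min (insert n B))"
    using assms(1,5) iB unfolding nearly_disjoint_def by auto
qed

lemma scm_ins:
  assumes BP: "B \<in> P" and nP: "\<forall>X\<in>P. n \<notin> X" and ne: "\<forall>X\<in>P. X \<noteq> {} \<and> finite X"
    and mB: "Min (insert n B) = Min B"
  shows "singly_covered_minimal (insert (insert n B) (P - {B})) = singly_covered_minimal P"
proof (intro equalityI subsetI)
  let ?Q = "insert (insert n B) (P - {B})"
  have minX: "Min X \<in> X" if "X \<in> P" for X using ne that by auto
  fix y assume "y \<in> singly_covered_minimal ?Q"
  then obtain B'' where B'': "B'' \<in> ?Q" "y = Min B''" "\<forall>B'\<in>?Q. y \<in> B' \<longrightarrow> B' = B''"
    unfolding singly_covered_minimal_def by blast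
  show "y \<in> singly_covered_minimal P"
  proof (cases "B'' = insert n B")
    case True
    have "\<forall>B'\<in>P. y \<in> B' \<longrightarrow> B' = B"
    proof (intro ballI impI)
      fix B' assume "B' \<in> P" "y \<in> B'"
      show "B' = B"
      proof (rule ccontr)
        assume "B' \<noteq> B"
        then have "B' = insert n B" using B''(3) True \<open>B' \<in> P\<close> \<open>y \<in> B'\<close> by blast
        then show False using nP \<open>B' \<in> P\<close> by auto
      qed
    qed
    then show ?thesis using BP B''(2) True mB unfolding singly_covered_minimal_def by auto
  next
    case False
    then have B''P: "B'' \<in> P" "B'' \<noteq> B" using B''(1) by auto
    have "\<forall>B'\<in>P. y \<in> B' \<longrightarrow> B' = B''"
    proof (intro ballI impI)
      fix B' assume "B' \<in> P" "y \<in> B'"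
      show "B' = B''"
      proof (cases "B' = B")
        case True
        then have "insert n B = B''" using B''(3) \<open>y \<in> B'\<close> by blast
        then show ?thesis using nP B''P by auto
      next
        case False
        then show ?thesis using B''(3) \<open>B' \<in> P\<close> \<open>y \<in> B'\<close> by blast
      qed
    qed
    then show ?thesis using B''P B''(2) unfolding singly_covered_minimal_def by auto
  qed
next
  let ?Q = "insert (insert n B) (P - {B})"
  have minX: "Min X \<in> X" if "X \<in> P" for X using ne that by auto
  fix y assume "y \<in> singly_covered_minimal P"
  then obtain B'' where B'': "B'' \<in> P" "y = Min B''" "\<forall>B'\<in>P. y \<in> B' \<longrightarrow> B' = B''"
    unfolding singly_covered_minimal_def by blast
  have yn: "y \<noteq> n" using minX[OF B''(1)] B''(2) nP B''(1) by auto
  show "y \<in> singly_covered_minimal ?Q"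
  proof (cases "B'' = B")
    case True
    have "\<forall>B'\<in>?Q. y \<in> B' \<longrightarrow> B' = insert n B"
    proof (intro ballI impI)
      fix B' assume "B' \<in> ?Q" "y \<in> B'"
      show "B' = insert n B"
      proof (rule ccontr)
        assume "B' \<noteq> insert n B"
        then have "B' \<in> P" "B' \<noteq> B" using \<open>B' \<in> ?Q\<close> by auto
        then show False using B''(3) True \<open>y \<in> B'\<close> by blast
      qed
    qed
    then show ?thesis using B''(2) True mB unfolding singly_covered_minimal_def by auto
  next
    case False
    have "\<forall>B'\<in>?Q. y \<in> B' \<longrightarrow> B' = B''"
    proof (intro ballI impI)
      fix B' assume "B' \<in> ?Q" "y \<in> B'"
      show "B' = B''"
      proof (cases "B' = insert n B")
        case True
        then have "y \<in> B" using \<open>y \<in> B'\<close> yn by auto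
        then have "B = B''" using B''(3) BP by blast
        then show ?thesis using False by simp
      next
        case False
        then show ?thesis using B''(3) \<open>B' \<in> ?Q\<close> \<open>y \<in> B'\<close> by blast
      qed
    qed
    moreover have "B'' \<in> ?Q" using B''(1) False by auto
    ultimately show ?thesis using B''(2) unfolding singly_covered_minimal_def by auto
  qed
qed

lemma fst_diff:
  assumes "inj_on fst C" "(B, s) \<in> C"
  shows "fst ` (C - {(B, s)}) = fst ` C - {B}"
proof (intro equalityI subsetI)
  fix X assume "X \<in> fst ` (C - {(B, s)})"
  then obtain c where c: "c \<in> C" "c \<noteq> (B, s)" "X = fst c" by auto
  then have "fst c \<noteq> B" using assms inj_onD[OF assms(1), of c "(B, s)"] by auto
  then show "X \<in> fst ` C - {B}" using c by auto
next
  fix X assume "X \<in> fst ` C - {B}"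
  then obtain c where "c \<in> C" "X = fst c" "X \<noteq> B" by auto
  then show "X \<in> fst ` (C - {(B, s)})" by force
qed

lemma ins1_valid:
  assumes lc: "linked_cycle N C" and Bs: "(B, s) \<in> C" and x: "x \<in> B"
  shows "linked_cycle (Suc N) (insert (insert (Suc N) B, s \<circ> transpose x (Suc N)) (C - {(B, s)}))"
    and "singly_covered_minimal (fst ` (insert (insert (Suc N) B, s \<circ> transpose x (Suc N)) (C - {(B, s)})))
         = singly_covered_minimal (fst ` C)"
proof -
  let ?n = "Suc N"
  let ?P = "fst ` C"
  let ?C' = "insert (insert ?n B, s \<circ> transpose x ?n) (C - {(B, s)})"
  let ?Q = "insert (insert ?n B) (?P - {B})"
  have lp: "linked_partition N ?P" and inj: "inj_on fst C" using lc_parts[OF lc] by auto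
  have BP: "B \<in> ?P" using Bs by force
  have sub: "X \<subseteq> {1..N}" if "X \<in> ?P" for X using lp_block[OF lp that] by simp
  have nP: "?n \<notin> X" if "X \<in> ?P" for X using sub[OF that] by auto
  have Bne: "B \<noteq> {}" and Bfin: "finite B" using lp_block[OF lp BP] by auto
  have mB: "Min (insert ?n B) = Min B"
  proof -
    have "Min B \<le> N" using sub[OF BP] lp_block(4)[OF lp BP] by auto
    then show ?thesis using Min_insert[OF Bfin Bne] by simp
  qed
  have Qeq: "fst ` ?C' = ?Q" using fst_diff[OF inj Bs] by simp
  have lpQ: "linked_partition ?n ?Q"
    unfolding linked_partition_def
  proof (intro conjI ballI impI)
    fix X assume X: "X \<in> ?Q"
    show "X \<noteq> {}"
    proof (cases "X = insert ?n B")
      case False then show ?thesis using X lp_block(1)[OF lp] by auto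
    qed simp
    show "X \<subseteq> {1..?n}"
    proof (cases "X = insert ?n B")
      case True then show ?thesis using sub[OF BP] by auto
    next
      case False then have "X \<in> ?P" using X by auto
      then show ?thesis using sub by fastforce
    qed
  next
    have "\<Union>?P = {1..N}" using lp unfolding linked_partition_def by simp
    moreover have "\<Union>?Q = insert ?n (\<Union>?P)" using BP by blast
    ultimately show "\<Union>?Q = {1..?n}" by (simp add: atLeastAtMostSuc_conv)
  next
    fix E F assume E: "E \<in> ?Q" and F: "F \<in> ?Q" and EF: "E \<noteq> F"
    show "nearly_disjoint E F"
    proof (cases "E = insert ?n B")
      case True
      then have "F \<in> ?P" "F \<noteq> B" using F EF by auto
      then have "nearly_disjoint B F" using lp_nd[OF lp BP] by blast
      then show ?thesis using nd_ins[OF _ nP[OF \<open>F \<in> ?P\<close>] Bfin Bne mB] True by simp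
    next
      case False
      then have E': "E \<in> ?P" "E \<noteq> B" using E by auto
      show ?thesis
      proof (cases "F = insert ?n B")
        case True
        then have "nearly_disjoint B E" using lp_nd[OF lp BP E'(1)] E' by blast
        then show ?thesis using nd_ins[OF _ nP[OF E'(1)] Bfin Bne mB] True nd_sym by simp
      next
        case False
        then have "F \<in> ?P" using F by auto
        then show ?thesis using lp_nd[OF lp E'(1) _ EF] by blast
      qed
    qed
  qed
  show "linked_cycle ?n ?C'"
  proof (rule lc_intro)
    show "linked_partition ?n (fst ` ?C')" using lpQ Qeq by simp
  next
    have i1: "inj_on fst (C - {(B, s)})" using inj by (rule inj_on_subset) auto
    have "insert ?n B \<notin> fst ` C"
    proof
      assume "insert ?n B \<in> fst ` C"
      then show False using nP by blast
    qed
    then have nf: "fst (insert ?n B, s \<circ> transpose x ?n) \<notin> fst ` (C - {(B, s)} - {(insert ?n B, s \<circ> transpose x ?n)})"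
      by auto
    show "inj_on fst ?C'" unfolding inj_on_insert by (intro conjI i1 nf)
  next
    fix B' s' assume h: "(B', s') \<in> ?C'"
    have cn: "cyclic_arrangement (insert ?n B) (s \<circ> transpose x ?n)"
      using cyc_ins[OF lc_parts(3)[OF lc Bs] nP[OF BP] x] .
    show "cyclic_arrangement B' s'"
    proof (cases "(B', s') \<in> C")
      case True then show ?thesis using lc_parts(3)[OF lc] by blast
    next
      case False then have "B' = insert ?n B" "s' = s \<circ> transpose x ?n" using h by auto
      then show ?thesis using cn by simp
    qed
  qed
  have ne: "\<forall>X\<in>?P. X \<noteq> {} \<and> finite X" using lp_block[OF lp] by blast
  have "\<forall>X\<in>?P. ?n \<notin> X" using nP by blast
  from scm_ins[OF BP this ne mB]
  show "singly_covered_minimal (fst ` ?C') = singly_covered_minimal ?P"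
    unfolding Qeq .
qed

lemma ins2_valid:
  assumes lc: "linked_cycle N C" and a: "a \<in> Sn (fst ` C)"
  shows "linked_cycle (Suc N) (insert ({a, Suc N}, transpose a (Suc N)) C)"
    and "singly_covered_minimal (fst ` (insert ({a, Suc N}, transpose a (Suc N)) C))
         = singly_covered_minimal (fst ` C)"
proof -
  let ?n = "Suc N"
  let ?P = "fst ` C"
  let ?C' = "insert ({a, ?n}, transpose a ?n) C"
  let ?Q = "insert {a, ?n} ?P"
  have lp: "linked_partition N ?P" and inj: "inj_on fst C" using lc_parts[OF lc] by auto
  obtain B where B: "B \<in> ?P" "a \<in> B" "a \<noteq> Min B" "\<forall>B'\<in>?P. a \<in> B' \<longrightarrow> B' = B"
    using a unfolding Sn_def by blast
  have sub: "X \<subseteq> {1..N}" if "X \<in> ?P" for X using lp_block[OF lp that] by simp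
  have nP: "?n \<notin> X" if "X \<in> ?P" for X using sub[OF that] by auto
  have aN: "a \<in> {1..N}" using sub[OF B(1)] B(2) by auto
  have an: "a \<noteq> ?n" using aN by auto
  have minan: "Min {a, ?n} = a" using aN by simp
  have cardan: "card {a, ?n} = 2" using an by simp
  have Qeq: "fst ` ?C' = ?Q" by simp
  have ndn: "nearly_disjoint {a, ?n} F" if "F \<in> ?P" for F
    unfolding nearly_disjoint_def
  proof
    fix i assume i: "i \<in> {a, ?n} \<inter> F"
    then have ia: "i = a" using nP[OF that] by auto
    then have "F = B" using B(4) that i by auto
    then show "(i = Min {a, ?n} \<and> 1 < card {a, ?n} \<and> i \<noteq> Min F) \<or>
      (i = Min F \<and> 1 < card F \<and> i \<noteq> Min {a, ?n})" using ia minan cardan B(3) by simp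
  qed
  have lpQ: "linked_partition ?n ?Q"
    unfolding linked_partition_def
  proof (intro conjI ballI impI)
    fix X assume X: "X \<in> ?Q"
    show "X \<noteq> {}"
    proof (cases "X = {a, ?n}")
      case False then show ?thesis using X lp_block(1)[OF lp] by auto
    qed simp
    show "X \<subseteq> {1..?n}"
    proof (cases "X = {a, ?n}")
      case True then show ?thesis using aN by auto
    next
      case False then have "X \<in> ?P" using X by auto
      then show ?thesis using sub by fastforce
    qed
  next
    have "\<Union>?P = {1..N}" using lp unfolding linked_partition_def by simp
    moreover have "\<Union>?Q = insert ?n (\<Union>?P)" using B by blast
    ultimately show "\<Union>?Q = {1..?n}" by (simp add: atLeastAtMostSuc_conv)
  next
    fix E F assume E: "E \<in> ?Q" and F: "F \<in> ?Q" and EF: "E \<noteq> F"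
    show "nearly_disjoint E F"
    proof (cases "E = {a, ?n}")
      case True
      then have "F \<in> ?P" using F EF by auto
      then show ?thesis using ndn True by simp
    next
      case False
      then have E': "E \<in> ?P" using E by auto
      show ?thesis
      proof (cases "F = {a, ?n}")
        case True
        then show ?thesis using ndn[OF E'] nd_sym by simp
      next
        case False
        then have "F \<in> ?P" using F by auto
        then show ?thesis using lp_nd[OF lp E' _ EF] by blast
      qed
    qed
  qed
  show "linked_cycle ?n ?C'"
  proof (rule lc_intro)
    show "linked_partition ?n (fst ` ?C')" using lpQ Qeq by simp
  next
    have "{a, ?n} \<notin> fst ` C"
    proof
      assume "{a, ?n} \<in> fst ` C"
      then show False using nP by blast
    qed
    then have nf: "fst ({a, ?n}, transpose a ?n) \<notin> fst ` (C - {({a, ?n}, transpose a ?n)})"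
      by auto
    show "inj_on fst ?C'" unfolding inj_on_insert by (intro conjI inj nf)
  next
    fix B' s' assume h: "(B', s') \<in> ?C'"
    have "cyclic_arrangement (insert ?n {a}) (id \<circ> transpose a ?n)"
      using cyc_ins[of "{a}" id ?n a] cyc_single an by auto
    then have cn: "cyclic_arrangement {a, ?n} (transpose a ?n)" by (simp add: insert_commute)
    show "cyclic_arrangement B' s'"
    proof (cases "(B', s') \<in> C")
      case True then show ?thesis using lc_parts(3)[OF lc] by blast
    next
      case False then have "B' = {a, ?n}" "s' = transpose a ?n" using h by auto
      then show ?thesis using cn by simp
    qed
  qed
  have minX: "Min X \<in> X" if "X \<in> ?P" for X using lp_block(4)[OF lp that] .
  show "singly_covered_minimal (fst ` ?C') = singly_covered_minimal ?P"
    unfolding Qeq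
  proof (intro equalityI subsetI)
    fix y assume "y \<in> singly_covered_minimal ?Q"
    then obtain B'' where B'': "B'' \<in> ?Q" "y = Min B''" "\<forall>B'\<in>?Q. y \<in> B' \<longrightarrow> B' = B''"
      unfolding singly_covered_minimal_def by blast
    show "y \<in> singly_covered_minimal ?P"
    proof (cases "B'' = {a, ?n}")
      case True
      then have "y = a" using B''(2) minan by simp
      then have "B = {a, ?n}" using B''(3) B(1,2) True by blast
      then show ?thesis using nP[OF B(1)] by simp
    next
      case False
      then have "B'' \<in> ?P" using B''(1) by auto
      moreover have "\<forall>B'\<in>?P. y \<in> B' \<longrightarrow> B' = B''" using B''(3) by blast
      ultimately show ?thesis using B''(2) unfolding singly_covered_minimal_def by blast
    qed
  next
    fix y assume "y \<in> singly_covered_minimal ?P"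
    then obtain B'' where B'': "B'' \<in> ?P" "y = Min B''" "\<forall>B'\<in>?P. y \<in> B' \<longrightarrow> B' = B''"
      unfolding singly_covered_minimal_def by blast
    have yB: "y \<in> B''" using minX[OF B''(1)] B''(2) by simp
    have ya: "y \<noteq> a"
    proof
      assume "y = a"
      then have "B'' = B" using B(4) B''(1) yB by blast
      then show False using B(3) B''(2) \<open>y = a\<close> by simp
    qed
    have yn: "y \<noteq> ?n" using nP[OF B''(1)] yB by auto
    have "\<forall>B'\<in>?Q. y \<in> B' \<longrightarrow> B' = B''"
    proof (intro ballI impI)
      fix B' assume "B' \<in> ?Q" "y \<in> B'"
      then show "B' = B''" using ya yn B''(3) by auto
    qed
    moreover have "B'' \<in> ?Q" using B''(1) by simp
    ultimately show "y \<in> singly_covered_minimal ?Q"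
      using B''(2) unfolding singly_covered_minimal_def by blast
  qed
qed

lemma top_block:
  assumes lc: "linked_cycle (Suc N) C"
  shows "\<exists>c\<in>C. Suc N \<in> fst c"
    and "\<And>c c'. c \<in> C \<Longrightarrow> c' \<in> C \<Longrightarrow> Suc N \<in> fst c \<Longrightarrow> Suc N \<in> fst c' \<Longrightarrow> c = c'"
proof -
  have lp: "linked_partition (Suc N) (fst ` C)" and inj: "inj_on fst C" using lc_parts[OF lc] by auto
  have "\<Union>(fst ` C) = {1..Suc N}" using lp unfolding linked_partition_def by simp
  then have "Suc N \<in> \<Union>(fst ` C)" by simp
  then show "\<exists>c\<in>C. Suc N \<in> fst c" by auto
  fix c c' assume "c \<in> C" "c' \<in> C" "Suc N \<in> fst c" "Suc N \<in> fst c'"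
  then have "fst c = fst c'" using lp_top[OF lp] by blast
  then show "c = c'" using inj_onD[OF inj] \<open>c \<in> C\<close> \<open>c' \<in> C\<close> by blast
qed

lemma others_sub:
  assumes lp: "linked_partition (Suc N) P" and BP: "B \<in> P" and nB: "Suc N \<in> B"
    and XP: "X \<in> P" and XB: "X \<noteq> B"
  shows "X \<subseteq> {1..N}" "Suc N \<notin> X"
proof -
  show nX: "Suc N \<notin> X"
  proof
    assume "Suc N \<in> X"
    then show False using lp_top[OF lp XP BP _ nB] XB by blast
  qed
  show "X \<subseteq> {1..N}"
  proof
    fix y assume "y \<in> X"
    then have "y \<in> {1..Suc N}" "y \<noteq> Suc N" using lp_block(2)[OF lp XP] nX by auto
    then show "y \<in> {1..N}" by auto
  qed
qed

lemma lc_del: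
  assumes lc: "linked_cycle (Suc N) C" and Bt: "(B, t) \<in> C" and nB: "Suc N \<in> B"
    and un: "\<Union>(fst ` C - {B}) = {1..N}"
  shows "linked_cycle N (C - {(B, t)})"
proof (rule lc_intro)
  have lp: "linked_partition (Suc N) (fst ` C)" and inj: "inj_on fst C" using lc_parts[OF lc] by auto
  have BP: "B \<in> fst ` C" using Bt by force
  have eq: "fst ` (C - {(B, t)}) = fst ` C - {B}" using fst_diff[OF inj Bt] .
  show "linked_partition N (fst ` (C - {(B, t)}))"
    unfolding eq linked_partition_def
  proof (intro conjI ballI impI)
    fix X assume "X \<in> fst ` C - {B}"
    then show "X \<noteq> {}" "X \<subseteq> {1..N}" using lp_block(1)[OF lp] others_sub(1)[OF lp BP nB] by auto
  next
    show "\<Union>(fst ` C - {B}) = {1..N}" by (rule un)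
  next
    fix E F assume "E \<in> fst ` C - {B}" "F \<in> fst ` C - {B}" "E \<noteq> F"
    then show "nearly_disjoint E F" using lp_nd[OF lp] by blast
  qed
  show "inj_on fst (C - {(B, t)})" using inj by (rule inj_on_subset) auto
  fix B' s' assume "(B', s') \<in> C - {(B, t)}"
  then show "cyclic_arrangement B' s'" using lc_parts(3)[OF lc] by blast
qed

lemma remA:
  assumes lc: "linked_cycle (Suc N) C" and h: "({Suc N}, id) \<in> C"
  shows "linked_cycle N (C - {({Suc N}, id)})"
proof (rule lc_del[OF lc h])
  have lp: "linked_partition (Suc N) (fst ` C)" using lc_parts[OF lc] by auto
  have BP: "{Suc N} \<in> fst ` C" using h by force
  have u: "\<Union>(fst ` C) = {1..Suc N}" using lp unfolding linked_partition_def by simp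
  show "\<Union>(fst ` C - {{Suc N}}) = {1..N}"
  proof (intro equalityI subsetI)
    fix y assume "y \<in> \<Union>(fst ` C - {{Suc N}})"
    then obtain X where X: "X \<in> fst ` C" "X \<noteq> {Suc N}" "y \<in> X" by blast
    then show "y \<in> {1..N}" using others_sub(1)[OF lp BP _ X(1,2)] by auto
  next
    fix y assume y: "y \<in> {1..N}"
    then have "y \<in> \<Union>(fst ` C)" using u by auto
    then obtain X where "X \<in> fst ` C" "y \<in> X" by blast
    moreover have "X \<noteq> {Suc N}" using y \<open>y \<in> X\<close> by auto
    ultimately show "y \<in> \<Union>(fst ` C - {{Suc N}})" by blast
  qed
qed simp

lemma remB2:
  assumes lc: "linked_cycle (Suc N) C" and h: "({a, Suc N}, t) \<in> C" and an: "a \<noteq> Suc N"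
    and F: "F \<in> fst ` C" "a \<in> F" "F \<noteq> {a, Suc N}"
  shows "t = transpose a (Suc N)" "linked_cycle N (C - {({a, Suc N}, t)})"
    "a \<in> Sn (fst ` (C - {({a, Suc N}, t)}))"
proof -
  let ?n = "Suc N"
  have lp: "linked_partition ?n (fst ` C)" and inj: "inj_on fst C" using lc_parts[OF lc] by auto
  show "t = transpose a ?n" using cyc_pair[OF an lc_parts(3)[OF lc h]] .
  have BP: "{a, ?n} \<in> fst ` C" using h by force
  have u: "\<Union>(fst ` C) = {1..Suc N}" using lp unfolding linked_partition_def by simp
  show "linked_cycle N (C - {({a, ?n}, t)})"
  proof (rule lc_del[OF lc h])
    show "\<Union>(fst ` C - {{a, ?n}}) = {1..N}"
    proof (intro equalityI subsetI)
      fix y assume "y \<in> \<Union>(fst ` C - {{a, ?n}})"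
      then obtain X where X: "X \<in> fst ` C" "X \<noteq> {a, ?n}" "y \<in> X" by blast
      then show "y \<in> {1..N}" using others_sub(1)[OF lp BP _ X(1,2)] by auto
    next
      fix y assume y: "y \<in> {1..N}"
      then have "y \<in> \<Union>(fst ` C)" using u by auto
      then obtain X where X: "X \<in> fst ` C" "y \<in> X" by blast
      show "y \<in> \<Union>(fst ` C - {{a, ?n}})"
      proof (cases "X = {a, ?n}")
        case True
        then have "y = a" using X y by auto
        then show ?thesis using F by blast
      next
        case False then show ?thesis using X by blast
      qed
    qed
  qed simp
  have eq: "fst ` (C - {({a, ?n}, t)}) = fst ` C - {{a, ?n}}" using fst_diff[OF inj h] .
  have aN: "a \<le> N" using others_sub(1)[OF lp BP _ F(1,3)] F(2) by auto
  have minan: "Min {a, ?n} = a" using aN by simp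
  have "a \<noteq> Min F"
    using lp_share[OF lp BP F(1) F(3)[symmetric] _ F(2)] minan by auto
  moreover have "\<forall>B'\<in>fst ` C - {{a, ?n}}. a \<in> B' \<longrightarrow> B' = F"
  proof (intro ballI impI)
    fix B' assume B': "B' \<in> fst ` C - {{a, ?n}}" "a \<in> B'"
    show "B' = F"
    proof (rule ccontr)
      assume "B' \<noteq> F"
      then show False using lp_three[OF lp BP F(1), of B' a] B' F by auto
    qed
  qed
  ultimately show "a \<in> Sn (fst ` (C - {({a, ?n}, t)}))"
    unfolding eq Sn_def using F by blast
qed

lemma remB1:
  assumes lc: "linked_cycle (Suc N) C" and Bt: "(B, t) \<in> C" and nB: "Suc N \<in> B"
    and Bn: "B \<noteq> {Suc N}"
    and nb2: "\<not> (\<exists>a. B = {a, Suc N} \<and> a \<noteq> Suc N \<and> (\<exists>F\<in>fst ` C. a \<in> F \<and> F \<noteq> {a, Suc N}))"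
  defines "B0 \<equiv> B - {Suc N}" and "s \<equiv> transpose (Suc N) (t (Suc N)) \<circ> t"
  shows "linked_cycle N (insert (B0, s) (C - {(B, t)}))" "inv t (Suc N) \<in> B0"
    "insert (insert (Suc N) B0, s \<circ> transpose (inv t (Suc N)) (Suc N))
        (insert (B0, s) (C - {(B, t)}) - {(B0, s)}) = C"
proof -
  let ?n = "Suc N"
  let ?P = "fst ` C"
  let ?C' = "insert (B0, s) (C - {(B, t)})"
  have lp: "linked_partition ?n ?P" and inj: "inj_on fst C" using lc_parts[OF lc] by auto
  have BP: "B \<in> ?P" using Bt by force
  have Bi: "B = insert ?n B0" using nB unfolding B0_def by auto
  have nB0: "?n \<notin> B0" unfolding B0_def by simp
  have B0ne: "B0 \<noteq> {}" using Bn nB unfolding B0_def by auto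
  have Bfin: "finite B" using lp_block(3)[OF lp BP] .
  have B0fin: "finite B0" using Bfin unfolding B0_def by simp
  have cB: "cyclic_arrangement (insert ?n B0) t" using lc_parts(3)[OF lc Bt] Bi by simp
  note cr = cyc_rem[OF cB nB0 B0ne]
  have cs: "cyclic_arrangement B0 s" using cr(1) unfolding s_def .
  show xB0: "inv t ?n \<in> B0" using cr(2) .
  have st: "s \<circ> transpose (inv t ?n) ?n = t" using cr(3) unfolding s_def .
  have B0sub: "B0 \<subseteq> {1..N}"
  proof
    fix y assume "y \<in> B0"
    then have "y \<in> {1..?n}" "y \<noteq> ?n" using lp_block(2)[OF lp BP] unfolding B0_def by auto
    then show "y \<in> {1..N}" by auto
  qed
  have mB: "Min B = Min B0"
  proof -
    have "Min B0 \<le> N" using B0sub Min_in[OF B0fin B0ne] by auto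
    then show ?thesis using Bi Min_insert[OF B0fin B0ne] by simp
  qed
  have oth: "X \<subseteq> {1..N}" "?n \<notin> X" if "X \<in> ?P" "X \<noteq> B" for X
    using others_sub[OF lp BP nB that] by auto
  have B0notP: "B0 \<notin> ?P"
  proof
    assume B0P: "B0 \<in> ?P"
    have "B0 \<noteq> B" using nB nB0 by auto
    have "Min B0 \<in> B0" using Min_in[OF B0fin B0ne] .
    then have "Min B0 \<in> B" using Bi by auto
    then show False
      using lp_share[OF lp BP B0P \<open>B0 \<noteq> B\<close>[symmetric] \<open>Min B0 \<in> B\<close> \<open>Min B0 \<in> B0\<close>] mB by auto
  qed
  have eqP: "fst ` (C - {(B, t)}) = ?P - {B}" using fst_diff[OF inj Bt] .
  have eqQ: "fst ` ?C' = insert B0 (?P - {B})" using eqP by simp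
  have u: "\<Union>?P = {1..Suc N}" using lp unfolding linked_partition_def by simp
  have ndB0: "nearly_disjoint B0 F" if FP: "F \<in> ?P" and FB: "F \<noteq> B" for F
    unfolding nearly_disjoint_def
  proof
    fix i assume i: "i \<in> B0 \<inter> F"
    then have iB: "i \<in> B" "i \<in> F" using Bi by auto
    have c1: "card B0 > 1" if "i = Min B"
    proof (rule ccontr)
      assume "\<not> card B0 > 1"
      then have "card B0 = 1" using B0ne B0fin card_gt_0_iff[of B0] by linarith
      then obtain a where a: "B0 = {a}" using card_1_singletonE by blast
      then have "B = {a, ?n}" "a \<noteq> ?n" using Bi nB0 by auto
      moreover have "a \<in> F" using i a by auto
      ultimately show False using nb2 FP FB by blast
    qed
    show "(i = Min B0 \<and> 1 < card B0 \<and> i \<noteq> Min F) \<or> (i = Min F \<and> 1 < card F \<and> i \<noteq> Min B0)"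
      using lp_share[OF lp BP FP FB[symmetric] iB] mB c1 by auto
  qed
  have lpQ: "linked_partition N (insert B0 (?P - {B}))"
    unfolding linked_partition_def
  proof (intro conjI ballI impI)
    fix X assume X: "X \<in> insert B0 (?P - {B})"
    show "X \<noteq> {}"
    proof (cases "X = B0")
      case False then show ?thesis using X lp_block(1)[OF lp] by auto
    qed (use B0ne in simp)
    show "X \<subseteq> {1..N}"
    proof (cases "X = B0")
      case True then show ?thesis using B0sub by simp
    next
      case False then have "X \<in> ?P" "X \<noteq> B" using X by auto
      then show ?thesis using oth by blast
    qed
  next
    show "\<Union>(insert B0 (?P - {B})) = {1..N}"
    proof (intro equalityI subsetI)
      fix y assume "y \<in> \<Union>(insert B0 (?P - {B}))"
      then obtain X where X: "X \<in> insert B0 (?P - {B})" "y \<in> X" by blast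
      show "y \<in> {1..N}"
      proof (cases "X = B0")
        case True then show ?thesis using B0sub X by auto
      next
        case False then have "X \<in> ?P" "X \<noteq> B" using X by auto
        then show ?thesis using oth X(2) by blast
      qed
    next
      fix y assume y: "y \<in> {1..N}"
      then have "y \<in> \<Union>?P" using u by auto
      then obtain X where X: "X \<in> ?P" "y \<in> X" by blast
      show "y \<in> \<Union>(insert B0 (?P - {B}))"
      proof (cases "X = B")
        case True
        then have "y \<in> B0" using X y Bi by auto
        then show ?thesis by blast
      next
        case False then show ?thesis using X by blast
      qed
    qed
  next
    fix E F assume E: "E \<in> insert B0 (?P - {B})" and F: "F \<in> insert B0 (?P - {B})" and EF: "E \<noteq> F"
    show "nearly_disjoint E F"
    proof (cases "E = B0")
      case True
      then have "F \<in> ?P" "F \<noteq> B" using F EF by auto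
      then show ?thesis using ndB0 True by simp
    next
      case False
      then have E': "E \<in> ?P" "E \<noteq> B" using E by auto
      show ?thesis
      proof (cases "F = B0")
        case True
        then show ?thesis using ndB0[OF E'] nd_sym by simp
      next
        case False
        then have "F \<in> ?P" using F by auto
        then show ?thesis using lp_nd[OF lp E'(1) _ EF] by blast
      qed
    qed
  qed
  show "linked_cycle N ?C'"
  proof (rule lc_intro)
    show "linked_partition N (fst ` ?C')" using lpQ eqQ by simp
  next
    have i1: "inj_on fst (C - {(B, t)})" using inj by (rule inj_on_subset) auto
    have "B0 \<notin> fst ` (C - {(B, t)})" using eqP B0notP by simp
    then have nf: "fst (B0, s) \<notin> fst ` (C - {(B, t)} - {(B0, s)})" by auto
    show "inj_on fst ?C'" unfolding inj_on_insert by (intro conjI i1 nf)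
  next
    fix B' s' assume h: "(B', s') \<in> ?C'"
    show "cyclic_arrangement B' s'"
    proof (cases "(B', s') \<in> C")
      case True then show ?thesis using lc_parts(3)[OF lc] by blast
    next
      case False then have "B' = B0" "s' = s" using h by auto
      then show ?thesis using cs by simp
    qed
  qed
  have "(B0, s) \<notin> C - {(B, t)}"
  proof
    assume "(B0, s) \<in> C - {(B, t)}"
    then have "B0 \<in> ?P" by force
    then show False using B0notP by simp
  qed
  then have "?C' - {(B0, s)} = C - {(B, t)}" by auto
  then show "insert (insert ?n B0, s \<circ> transpose (inv t ?n) ?n) (?C' - {(B0, s)}) = C"
    using st Bi Bt by auto
qed

lemma card_indic:
  assumes "finite U" "X \<subseteq> U"
  shows "(\<Sum>y\<in>U. (if y \<in> X then 1 else 0::nat)) = card X"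
proof -
  have "(\<Sum>y\<in>U. (if y \<in> X then 1 else 0::nat)) = (\<Sum>y\<in>{y\<in>U. y \<in> X}. 1)"
    using sum.inter_filter[OF assms(1), of "\<lambda>_. 1::nat" "\<lambda>y. y \<in> X"] by simp
  also have "{y\<in>U. y \<in> X} = X" using assms(2) by auto
  finally show ?thesis by simp
qed

lemma per_elem:
  assumes lp: "linked_partition N P" and y: "y \<in> {1..N}"
  shows "card {X\<in>P. y \<in> X} + (if y \<in> Sn P then 1 else 0) + (if y \<in> singly_covered_minimal P then 1 else 0) = 2"
proof -
  have "\<Union>P = {1..N}" using lp unfolding linked_partition_def by simp
  then obtain X where X: "X \<in> P" "y \<in> X" using y by blast
  show ?thesis
  proof (cases "\<forall>X'\<in>P. y \<in> X' \<longrightarrow> X' = X")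
    case True
    have d: "{X\<in>P. y \<in> X} = {X}"
    proof (intro equalityI subsetI)
      fix Z assume "Z \<in> {X\<in>P. y \<in> X}"
      then have "Z \<in> P" "y \<in> Z" by simp_all
      then have "Z = X" using True by blast
      then show "Z \<in> {X}" by simp
    next
      fix Z assume "Z \<in> {X}"
      then show "Z \<in> {X\<in>P. y \<in> X}" using X by simp
    qed
    have s1: "y \<in> Sn P \<longleftrightarrow> y \<noteq> Min X"
    proof
      assume "y \<in> Sn P"
      then obtain B where B: "B \<in> P" "y \<in> B" "y \<noteq> Min B" unfolding Sn_def by blast
      have "B = X" using True B(1,2) by blast
      then show "y \<noteq> Min X" using B(3) by simp
    next
      assume "y \<noteq> Min X"
      then have "X \<in> P \<and> y \<in> X \<and> y \<noteq> Min X \<and> (\<forall>B'\<in>P. y \<in> B' \<longrightarrow> B' = X)" using X True by blast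
      then show "y \<in> Sn P" unfolding Sn_def by blast
    qed
    have s2: "y \<in> singly_covered_minimal P \<longleftrightarrow> y = Min X"
    proof
      assume "y \<in> singly_covered_minimal P"
      then obtain B where B: "B \<in> P" "y = Min B" unfolding singly_covered_minimal_def by blast
      then have "y \<in> B" using lp_block(4)[OF lp B(1)] by simp
      then have "B = X" using True B(1) by blast
      then show "y = Min X" using B by simp
    next
      assume "y = Min X"
      then have "X \<in> P \<and> y = Min X \<and> (\<forall>B'\<in>P. y \<in> B' \<longrightarrow> B' = X)" using X True by blast
      then show "y \<in> singly_covered_minimal P"
        unfolding singly_covered_minimal_def by blast
    qed
    show ?thesis
    proof (cases "y = Min X")
      case True then show ?thesis using d s1 s2 by simp
    next
      case False then show ?thesis using d s1 s2 by simp
    qed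
  next
    case False
    then obtain X' where X': "X' \<in> P" "y \<in> X'" "X' \<noteq> X" by blast
    have d: "{X\<in>P. y \<in> X} = {X, X'}"
    proof (intro equalityI subsetI)
      fix Z assume "Z \<in> {X\<in>P. y \<in> X}"
      then have "Z \<in> P" "y \<in> Z" by auto
      show "Z \<in> {X, X'}"
      proof (rule ccontr)
        assume "Z \<notin> {X, X'}"
        then have "X \<noteq> Z" "X' \<noteq> Z" by auto
        from lp_three[OF lp X(1) X'(1) \<open>Z \<in> P\<close> X'(3)[symmetric] this X(2) X'(2) \<open>y \<in> Z\<close>]
        show False .
      qed
    next
      fix Z assume "Z \<in> {X, X'}"
      then show "Z \<in> {X\<in>P. y \<in> X}" using X X' by blast
    qed
    have s1: "y \<notin> Sn P"
    proof
      assume "y \<in> Sn P"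
      then obtain B where "B \<in> P" "\<forall>B'\<in>P. y \<in> B' \<longrightarrow> B' = B" unfolding Sn_def by blast
      then have "X = B" "X' = B" using X X' by auto
      then show False using X'(3) by simp
    qed
    have s2: "y \<notin> singly_covered_minimal P"
    proof
      assume "y \<in> singly_covered_minimal P"
      then obtain B where "B \<in> P" "\<forall>B'\<in>P. y \<in> B' \<longrightarrow> B' = B" unfolding singly_covered_minimal_def by blast
      then have "X = B" "X' = B" using X X' by auto
      then show False using X'(3) by simp
    qed
    show ?thesis using d s1 s2 X'(3) by simp
  qed
qed

lemma Sn_sub:
  assumes "linked_partition N P"
  shows "Sn P \<subseteq> {1..N}"
proof
  fix y assume "y \<in> Sn P"
  then obtain B where "B \<in> P" "y \<in> B" unfolding Sn_def by blast
  then show "y \<in> {1..N}" using lp_block(2)[OF assms \<open>B \<in> P\<close>] by auto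
qed

lemma lc_finite:
  assumes lc: "linked_cycle N C"
  shows "finite C" "\<And>c. c \<in> C \<Longrightarrow> finite (fst c)"
proof -
  have lp: "linked_partition N (fst ` C)" and inj: "inj_on fst C" using lc_parts[OF lc] by auto
  have "fst ` C \<subseteq> Pow {1..N}" using lp_block(2)[OF lp] by auto
  then have "finite (fst ` C)" using finite_subset by blast
  then show "finite C" using finite_imageD[OF _ inj] by blast
  fix c assume "c \<in> C"
  then show "finite (fst c)" using lp_block(3)[OF lp] by auto
qed

lemma count_tags:
  assumes lc: "linked_cycle N C"
  shows "card (SIGMA c:C. fst c) + card (Sn (fst ` C)) + card (singly_covered_minimal (fst ` C)) = 2 * N"
proof -
  let ?P = "fst ` C"
  let ?U = "{1..N::nat}"
  have lp: "linked_partition N ?P" and inj: "inj_on fst C" using lc_parts[OF lc] by auto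
  have fC: "finite C" using lc_finite[OF lc] by simp
  have fP: "finite ?P" using fC by simp
  have "card (SIGMA c:C. fst c) = (\<Sum>c\<in>C. card (fst c))"
    using card_SigmaI[OF fC] lc_finite(2)[OF lc] by blast
  also have "\<dots> = (\<Sum>X\<in>?P. card X)" using sum.reindex[OF inj, of card] by simp
  also have "\<dots> = (\<Sum>X\<in>?P. \<Sum>y\<in>?U. (if y \<in> X then 1 else 0))"
    using card_indic[of ?U] lp_block(2)[OF lp] by (intro sum.cong) auto
  also have "\<dots> = (\<Sum>y\<in>?U. \<Sum>X\<in>?P. (if y \<in> X then 1 else 0))" by (rule sum.swap)
  also have "\<dots> = (\<Sum>y\<in>?U. card {X\<in>?P. y \<in> X})"
  proof (intro sum.cong refl)
    fix y
    have "(\<Sum>X\<in>?P. (if y \<in> X then 1 else 0::nat)) = (\<Sum>X\<in>{X\<in>?P. y \<in> X}. 1)"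
      using sum.inter_filter[OF fP, of "\<lambda>_. 1::nat" "\<lambda>X. y \<in> X"] by simp
    then show "(\<Sum>X\<in>?P. (if y \<in> X then 1 else 0::nat)) = card {X\<in>?P. y \<in> X}" by simp
  qed
  finally have c1: "card (SIGMA c:C. fst c) = (\<Sum>y\<in>?U. card {X\<in>?P. y \<in> X})" .
  have c2: "card (Sn ?P) = (\<Sum>y\<in>?U. (if y \<in> Sn ?P then 1 else 0))"
    using card_indic[OF _ Sn_sub[OF lp]] by simp
  have c3: "card (singly_covered_minimal ?P) = (\<Sum>y\<in>?U. (if y \<in> singly_covered_minimal ?P then 1 else 0))"
    using card_indic[OF _ scm_sub[OF lp]] by simp
  have "card (SIGMA c:C. fst c) + card (Sn ?P) + card (singly_covered_minimal ?P)
      = (\<Sum>y\<in>?U. card {X\<in>?P. y \<in> X} + (if y \<in> Sn ?P then 1 else 0) + (if y \<in> singly_covered_minimal ?P then 1 else 0))"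
    unfolding c1 c2 c3 by (simp add: sum.distrib)
  also have "\<dots> = (\<Sum>y\<in>?U. 2)" using per_elem[OF lp] by (intro sum.cong) auto
  finally show ?thesis by simp
qed

definition Lset :: "nat \<Rightarrow> nat \<Rightarrow> (nat set \<times> (nat \<Rightarrow> nat)) set set" where
  "Lset n m = {C. linked_cycle n C \<and> card (singly_covered_minimal (fst ` C)) = m}"

lemma f_Lset: "f_lc n m = card (Lset n m)"
  unfolding f_lc_def Lset_def ..

lemma nin_blocks:
  assumes "linked_cycle N C" "c \<in> C"
  shows "Suc N \<notin> fst c"
proof -
  have lp: "linked_partition N (fst ` C)" using lc_parts[OF assms(1)] by auto
  have "fst c \<subseteq> {1..N}" using lp_block(2)[OF lp] assms(2) by auto
  then show ?thesis by auto
qed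

lemma Lset_finite: "finite (Lset n m)"
proof (rule finite_subset)
  show "Lset n m \<subseteq> Pow (Pow {1..n} \<times> {s. s permutes {1..n}})"
  proof
    fix C assume "C \<in> Lset n m"
    then have lc: "linked_cycle n C" unfolding Lset_def by simp
    have lp: "linked_partition n (fst ` C)" using lc_parts[OF lc] by auto
    show "C \<in> Pow (Pow {1..n} \<times> {s. s permutes {1..n}})"
    proof (intro PowI subsetI)
      fix c assume c: "c \<in> C"
      obtain B t where Bt: "c = (B, t)" by force
      have Bs: "B \<subseteq> {1..n}" using lp_block(2)[OF lp] c Bt by force
      have "t permutes B" using lc_parts(3)[OF lc] c Bt unfolding cyclic_arrangement_def by blast
      then have "t permutes {1..n}" using permutes_subset Bs by blast
      then show "c \<in> Pow {1..n} \<times> {s. s permutes {1..n}}" using Bs Bt by simp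
    qed
  qed
  show "finite (Pow (Pow {1..n} \<times> {s. s permutes {1..n}}))"
    using finite_permutations[of "{1..n}"] by simp
qed

definition Phi0 :: "nat \<Rightarrow> (nat set \<times> (nat \<Rightarrow> nat)) set \<Rightarrow> (nat set \<times> (nat \<Rightarrow> nat)) set" where
  "Phi0 n C = insert ({n}, id) C"

lemma bijA:
  "bij_betw (Phi0 (Suc N)) (Lset N k) {C\<in>Lset (Suc N) (Suc k). ({Suc N}, id) \<in> C}"
  unfolding bij_betw_def
proof (intro conjI)
  let ?n = "Suc N"
  have notin: "({?n}, id) \<notin> C" if "C \<in> Lset N k" for C
  proof
    assume "({?n}, id) \<in> C"
    then show False using nin_blocks[of N C "({?n}, id)"] that unfolding Lset_def by simp
  qed
  show "inj_on (Phi0 ?n) (Lset N k)"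
  proof (rule inj_onI)
    fix C1 C2 assume h: "C1 \<in> Lset N k" "C2 \<in> Lset N k" "Phi0 ?n C1 = Phi0 ?n C2"
    have "C1 = Phi0 ?n C1 - {({?n}, id)}" using notin[OF h(1)] unfolding Phi0_def by simp
    also have "\<dots> = Phi0 ?n C2 - {({?n}, id)}" using h(3) by simp
    also have "\<dots> = C2" using notin[OF h(2)] unfolding Phi0_def by simp
    finally show "C1 = C2" .
  qed
  show "Phi0 ?n ` Lset N k = {C\<in>Lset ?n (Suc k). ({?n}, id) \<in> C}"
  proof (intro equalityI subsetI)
    fix D assume "D \<in> Phi0 ?n ` Lset N k"
    then obtain C where C: "C \<in> Lset N k" "D = Phi0 ?n C" by blast
    have lc: "linked_cycle N C" and ck: "card (singly_covered_minimal (fst ` C)) = k"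
      using C(1) unfolding Lset_def by auto
    note v = addS_valid[OF lc]
    have fin: "finite (singly_covered_minimal (fst ` C))"
      using scm_sub[OF lc_parts(1)[OF lc]] finite_subset by blast
    have "card (singly_covered_minimal (fst ` D)) = Suc k"
      using C(2) v(2,3) fin ck unfolding Phi0_def by simp
    then show "D \<in> {C\<in>Lset ?n (Suc k). ({?n}, id) \<in> C}"
      using v(1) C(2) unfolding Lset_def Phi0_def by simp
  next
    fix D assume "D \<in> {C\<in>Lset ?n (Suc k). ({?n}, id) \<in> C}"
    then have lc: "linked_cycle ?n D" and ck: "card (singly_covered_minimal (fst ` D)) = Suc k"
      and h: "({?n}, id) \<in> D" unfolding Lset_def by auto
    let ?C = "D - {({?n}, id)}"
    have lc': "linked_cycle N ?C" using remA[OF lc h] .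
    have DC: "D = Phi0 ?n ?C" using h unfolding Phi0_def by auto
    note v = addS_valid[OF lc']
    have fin: "finite (singly_covered_minimal (fst ` ?C))"
      using scm_sub[OF lc_parts(1)[OF lc']] finite_subset by blast
    have DD: "D = insert ({?n}, id) ?C" using DC unfolding Phi0_def .
    have "singly_covered_minimal (fst ` D) = singly_covered_minimal (fst ` insert ({?n}, id) ?C)"
      by (rule arg_cong[where f="\<lambda>X. singly_covered_minimal (fst ` X)"], rule DD)
    also have "\<dots> = insert ?n (singly_covered_minimal (fst ` ?C))" by (rule v(2))
    finally have "card (singly_covered_minimal (fst ` D)) = Suc (card (singly_covered_minimal (fst ` ?C)))"
      using v(3) fin by simp
    then have "?C \<in> Lset N k" using ck lc' unfolding Lset_def by simp
    then show "D \<in> Phi0 ?n ` Lset N k" using DC by blast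
  qed
qed

definition Phi2 :: "nat \<Rightarrow> (nat set \<times> (nat \<Rightarrow> nat)) set \<times> nat \<Rightarrow> (nat set \<times> (nat \<Rightarrow> nat)) set" where
  "Phi2 n p = insert ({snd p, n}, transpose (snd p) n) (fst p)"

definition has2 :: "nat \<Rightarrow> (nat set \<times> (nat \<Rightarrow> nat)) set \<Rightarrow> bool" where
  "has2 n C \<longleftrightarrow> (\<exists>a t. ({a, n}, t) \<in> C \<and> a \<noteq> n \<and> (\<exists>F\<in>fst ` C. a \<in> F \<and> F \<noteq> {a, n}))"

lemma Sn_elem:
  assumes "a \<in> Sn P"
  obtains B where "B \<in> P" "a \<in> B" "a \<noteq> Min B"
  using assms unfolding Sn_def by blast

lemma bijB2:
  "bij_betw (Phi2 (Suc N)) (SIGMA C:Lset N m. Sn (fst ` C))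
     {C\<in>Lset (Suc N) m. ({Suc N}, id) \<notin> C \<and> has2 (Suc N) C}"
  unfolding bij_betw_def
proof (intro conjI)
  let ?n = "Suc N"
  have notin: "({a, ?n}, tt) \<notin> C" if "C \<in> Lset N m" for C a tt
  proof
    assume "({a, ?n}, tt) \<in> C"
    then show False using nin_blocks[of N C "({a, ?n}, tt)"] that unfolding Lset_def by simp
  qed
  have an: "a \<noteq> ?n" if "C \<in> Lset N m" "a \<in> Sn (fst ` C)" for C a
  proof -
    have lc: "linked_cycle N C" using that(1) unfolding Lset_def by simp
    have "a \<in> {1..N}" using Sn_sub[OF lc_parts(1)[OF lc]] that(2) by blast
    then show ?thesis by simp
  qed
  show "inj_on (Phi2 ?n) (SIGMA C:Lset N m. Sn (fst ` C))"
  proof (rule inj_onI)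
    fix p1 p2 assume h: "p1 \<in> (SIGMA C:Lset N m. Sn (fst ` C))" "p2 \<in> (SIGMA C:Lset N m. Sn (fst ` C))"
      "Phi2 ?n p1 = Phi2 ?n p2"
    obtain C1 a1 where p1: "p1 = (C1, a1)" by force
    obtain C2 a2 where p2: "p2 = (C2, a2)" by force
    have m1: "C1 \<in> Lset N m" "a1 \<in> Sn (fst ` C1)" using h(1) p1 by auto
    have m2: "C2 \<in> Lset N m" "a2 \<in> Sn (fst ` C2)" using h(2) p2 by auto
    have eq: "insert ({a1, ?n}, transpose a1 ?n) C1 = insert ({a2, ?n}, transpose a2 ?n) C2"
      using h(3) p1 p2 unfolding Phi2_def by simp
    have "({a1, ?n}, transpose a1 ?n) \<in> insert ({a2, ?n}, transpose a2 ?n) C2" using eq by blast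
    then have "{a1, ?n} = {a2, ?n}" using notin[OF m2(1)] by blast
    then have a12: "a1 = a2" using an[OF m1] an[OF m2] by (simp add: doubleton_eq_iff)
    have "C1 = insert ({a1, ?n}, transpose a1 ?n) C1 - {({a1, ?n}, transpose a1 ?n)}"
      using notin[OF m1(1)] by simp
    also have "\<dots> = C2" using eq a12 notin[OF m2(1)] by simp
    finally show "p1 = p2" using p1 p2 a12 by simp
  qed
  show "Phi2 ?n ` (SIGMA C:Lset N m. Sn (fst ` C)) = {C\<in>Lset ?n m. ({?n}, id) \<notin> C \<and> has2 ?n C}"
  proof (intro equalityI subsetI)
    fix D assume "D \<in> Phi2 ?n ` (SIGMA C:Lset N m. Sn (fst ` C))"
    then obtain C a where C: "C \<in> Lset N m" "a \<in> Sn (fst ` C)" "D = Phi2 ?n (C, a)" by blast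
    have lc: "linked_cycle N C" and ck: "card (singly_covered_minimal (fst ` C)) = m"
      using C(1) unfolding Lset_def by auto
    note v = ins2_valid[OF lc C(2)]
    have DD: "D = insert ({a, ?n}, transpose a ?n) C" using C(3) unfolding Phi2_def by simp
    have "singly_covered_minimal (fst ` D) = singly_covered_minimal (fst ` insert ({a, ?n}, transpose a ?n) C)"
      by (rule arg_cong[where f="\<lambda>X. singly_covered_minimal (fst ` X)"], rule DD)
    also have "\<dots> = singly_covered_minimal (fst ` C)" by (rule v(2))
    finally have sc: "card (singly_covered_minimal (fst ` D)) = m" using ck by simp
    have a_n: "a \<noteq> ?n" using an[OF C(1,2)] .
    have nid: "({?n}, id) \<notin> D"
    proof
      assume "({?n}, id) \<in> D"
      then have "({?n}, id) = ({a, ?n}, transpose a ?n) \<or> ({?n}, id) \<in> C" using DD by simp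
      then show False
      proof
        assume "({?n}, id) = ({a, ?n}, transpose a ?n)"
        then have "{?n} = {a, ?n}" by simp
        then show False using a_n by simp
      next
        assume "({?n}, id) \<in> C"
        from nin_blocks[OF lc this] show False by simp
      qed
    qed
    obtain B where B: "B \<in> fst ` C" "a \<in> B" using C(2) by (rule Sn_elem)
    obtain c where c: "c \<in> C" "B = fst c" using B(1) by blast
    have "B \<noteq> {a, ?n}"
    proof
      assume "B = {a, ?n}"
      then have "?n \<in> fst c" using c(2) by simp
      then show False using nin_blocks[OF lc c(1)] by simp
    qed
    moreover have "({a, ?n}, transpose a ?n) \<in> D" using DD by simp
    moreover have "B \<in> fst ` D" using DD B(1) by simp
    ultimately have "has2 ?n D" unfolding has2_def using a_n B(2) by blast
    then show "D \<in> {C\<in>Lset ?n m. ({?n}, id) \<notin> C \<and> has2 ?n C}"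
      using v(1) DD sc nid unfolding Lset_def by simp
  next
    fix D assume "D \<in> {C\<in>Lset ?n m. ({?n}, id) \<notin> C \<and> has2 ?n C}"
    then have lc: "linked_cycle ?n D" and ck: "card (singly_covered_minimal (fst ` D)) = m"
      and h: "has2 ?n D" unfolding Lset_def by auto
    obtain a t F where at: "({a, ?n}, t) \<in> D" "a \<noteq> ?n" "F \<in> fst ` D" "a \<in> F" "F \<noteq> {a, ?n}"
      using h unfolding has2_def by blast
    note r = remB2[OF lc at]
    let ?C = "D - {({a, ?n}, t)}"
    have DD: "D = insert ({a, ?n}, transpose a ?n) ?C" using at(1) r(1) by auto
    note v = ins2_valid[OF r(2) r(3)]
    have "singly_covered_minimal (fst ` D) = singly_covered_minimal (fst ` insert ({a, ?n}, transpose a ?n) ?C)"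
      by (rule arg_cong[where f="\<lambda>X. singly_covered_minimal (fst ` X)"], rule DD)
    also have "\<dots> = singly_covered_minimal (fst ` ?C)" by (rule v(2))
    finally have "card (singly_covered_minimal (fst ` ?C)) = m" using ck by simp
    then have "(?C, a) \<in> (SIGMA C:Lset N m. Sn (fst ` C))" using r(2,3) unfolding Lset_def by simp
    moreover have "D = Phi2 ?n (?C, a)" using DD unfolding Phi2_def by simp
    ultimately show "D \<in> Phi2 ?n ` (SIGMA C:Lset N m. Sn (fst ` C))" by blast
  qed
qed

definition Phi1 :: "nat \<Rightarrow> (nat set \<times> (nat \<Rightarrow> nat)) set \<times> ((nat set \<times> (nat \<Rightarrow> nat)) \<times> nat)
    \<Rightarrow> (nat set \<times> (nat \<Rightarrow> nat)) set" where
  "Phi1 n p = insert (insert n (fst (fst (snd p))), snd (fst (snd p)) \<circ> transpose (snd (snd p)) n)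
      (fst p - {fst (snd p)})"

lemma Phi1_simp: "Phi1 n (C, ((B, s), x)) = insert (insert n B, s \<circ> transpose x n) (C - {(B, s)})"
  unfolding Phi1_def by simp

lemma comp_transpose_cancel: "(s \<circ> transpose x n) \<circ> transpose x n = s"
  by (simp add: o_assoc[symmetric])

lemma bijB1:
  "bij_betw (Phi1 (Suc N)) (SIGMA C:Lset N m. (SIGMA c:C. fst c))
     {C\<in>Lset (Suc N) m. ({Suc N}, id) \<notin> C \<and> \<not> has2 (Suc N) C}"
  unfolding bij_betw_def
proof (intro conjI)
  let ?n = "Suc N"
  let ?Dom = "SIGMA C:Lset N m. (SIGMA c:C. fst c)"
  have dom_elim: "\<exists>C B s x. p = (C, ((B, s), x)) \<and> C \<in> Lset N m \<and> (B, s) \<in> C \<and> x \<in> B \<and> linked_cycle N C"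
    if "p \<in> ?Dom" for p
    using that unfolding Lset_def by force
  show "inj_on (Phi1 ?n) ?Dom"
  proof (rule inj_onI)
    fix p1 p2 assume h: "p1 \<in> ?Dom" "p2 \<in> ?Dom" "Phi1 ?n p1 = Phi1 ?n p2"
    obtain C1 B1 s1 x1 where p1: "p1 = (C1, ((B1, s1), x1))" "(B1, s1) \<in> C1" "x1 \<in> B1" "linked_cycle N C1"
      using dom_elim[OF h(1)] by blast
    obtain C2 B2 s2 x2 where p2: "p2 = (C2, ((B2, s2), x2))" "(B2, s2) \<in> C2" "x2 \<in> B2" "linked_cycle N C2"
      using dom_elim[OF h(2)] by blast
    let ?e1 = "(insert ?n B1, s1 \<circ> transpose x1 ?n)"
    let ?e2 = "(insert ?n B2, s2 \<circ> transpose x2 ?n)"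
    have eq: "insert ?e1 (C1 - {(B1, s1)}) = insert ?e2 (C2 - {(B2, s2)})"
      using h(3) p1(1) p2(1) by (simp add: Phi1_simp)
    have n1: "?e1 \<notin> C1 - {(B1, s1)}"
    proof
      assume "?e1 \<in> C1 - {(B1, s1)}"
      then have "?e1 \<in> C1" by simp
      from nin_blocks[OF p1(4) this] show False by simp
    qed
    have n2: "?e2 \<notin> C2 - {(B2, s2)}"
    proof
      assume "?e2 \<in> C2 - {(B2, s2)}"
      then have "?e2 \<in> C2" by simp
      from nin_blocks[OF p2(4) this] show False by simp
    qed
    have "?e1 \<in> insert ?e2 (C2 - {(B2, s2)})" using eq by blast
    then have e12: "?e1 = ?e2"
    proof
      assume "?e1 \<in> C2 - {(B2, s2)}"
      then have "?e1 \<in> C2" by simp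
      from nin_blocks[OF p2(4) this] show "?e1 = ?e2" by simp
    qed
    have nb1: "?n \<notin> B1" using nin_blocks[OF p1(4) p1(2)] by simp
    have nb2: "?n \<notin> B2" using nin_blocks[OF p2(4) p2(2)] by simp
    have B12: "B1 = B2"
    proof -
      have "insert ?n B1 = insert ?n B2" using e12 by simp
      then have "insert ?n B1 - {?n} = insert ?n B2 - {?n}" by simp
      then show ?thesis using nb1 nb2 by simp
    qed
    have t12: "s1 \<circ> transpose x1 ?n = s2 \<circ> transpose x2 ?n" using e12 by simp
    have c1: "cyclic_arrangement (insert ?n B1) (s1 \<circ> transpose x1 ?n)"
      using cyc_ins[OF lc_parts(3)[OF p1(4) p1(2)] nb1 p1(3)] .
    have injt: "inj (s1 \<circ> transpose x1 ?n)"
      using c1 unfolding cyclic_arrangement_def by (blast intro: permutes_inj)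
    have sn1: "s1 ?n = ?n"
      using lc_parts(3)[OF p1(4) p1(2)] nb1 unfolding cyclic_arrangement_def by (blast intro: permutes_not_in)
    have sn2: "s2 ?n = ?n"
      using lc_parts(3)[OF p2(4) p2(2)] nb2 unfolding cyclic_arrangement_def by (blast intro: permutes_not_in)
    have "(s1 \<circ> transpose x1 ?n) x1 = ?n" using sn1 by simp
    moreover have "(s1 \<circ> transpose x1 ?n) x2 = ?n" using sn2 t12 by (metis comp_apply transpose_apply_first)
    ultimately have x12: "x1 = x2" using injt by (metis injD)
    have s12: "s1 = s2"
      using comp_transpose_cancel[of s1 x1 ?n] comp_transpose_cancel[of s2 x2 ?n] t12 x12 by metis
    have "C1 = insert (B1, s1) (C1 - {(B1, s1)})" using p1(2) by auto
    also have "C1 - {(B1, s1)} = C2 - {(B2, s2)}"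
    proof -
      have "insert ?e1 (C1 - {(B1, s1)}) - {?e1} = insert ?e2 (C2 - {(B2, s2)}) - {?e2}" using eq e12 by simp
      then show ?thesis using n1 n2 by simp
    qed
    also have "insert (B1, s1) (C2 - {(B2, s2)}) = C2" using p2(2) B12 s12 by auto
    finally show "p1 = p2" using p1(1) p2(1) B12 s12 x12 by simp
  qed
  show "Phi1 ?n ` ?Dom = {C\<in>Lset ?n m. ({?n}, id) \<notin> C \<and> \<not> has2 ?n C}"
  proof (intro equalityI subsetI)
    fix D assume "D \<in> Phi1 ?n ` ?Dom"
    then obtain p where p: "p \<in> ?Dom" "D = Phi1 ?n p" by blast
    obtain C B s x where q: "p = (C, ((B, s), x))" "C \<in> Lset N m" "(B, s) \<in> C" "x \<in> B" "linked_cycle N C"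
      using dom_elim[OF p(1)] by blast
    have ck: "card (singly_covered_minimal (fst ` C)) = m" using q(2) unfolding Lset_def by simp
    let ?e = "(insert ?n B, s \<circ> transpose x ?n)"
    have DD: "D = insert ?e (C - {(B, s)})" using p(2) q(1) by (simp add: Phi1_simp)
    note v = ins1_valid[OF q(5) q(3) q(4)]
    have "singly_covered_minimal (fst ` D) = singly_covered_minimal (fst ` insert ?e (C - {(B, s)}))"
      by (rule arg_cong[where f="\<lambda>X. singly_covered_minimal (fst ` X)"], rule DD)
    also have "\<dots> = singly_covered_minimal (fst ` C)" by (rule v(2))
    finally have sc: "card (singly_covered_minimal (fst ` D)) = m" using ck by simp
    have lp: "linked_partition N (fst ` C)" and inj: "inj_on fst C" using lc_parts[OF q(5)] by auto
    have BP: "B \<in> fst ` C" using q(3) by force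
    have nB: "?n \<notin> B" using nin_blocks[OF q(5) q(3)] by simp
    have Bne: "B \<noteq> {}" using q(4) by auto
    have only: "d = ?e" if "d \<in> D" "?n \<in> fst d" for d
    proof (rule ccontr)
      assume "d \<noteq> ?e"
      then have "d \<in> C" using that(1) DD by simp
      from nin_blocks[OF q(5) this] that(2) show False by simp
    qed
    have nid: "({?n}, id) \<notin> D"
    proof
      assume h1: "({?n}, id) \<in> D"
      have "({?n}, id) = ?e" by (rule only[OF h1]) simp
      then have "insert ?n B = {?n}" by simp
      then show False using nB Bne by auto
    qed
    have nh: "\<not> has2 ?n D"
    proof
      assume "has2 ?n D"
      then obtain a t F where at: "({a, ?n}, t) \<in> D" "a \<noteq> ?n" "F \<in> fst ` D" "a \<in> F" "F \<noteq> {a, ?n}"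
        unfolding has2_def by blast
      have "({a, ?n}, t) = ?e" using only[OF at(1)] by simp
      then have iB: "insert ?n B = {a, ?n}" by simp
      have Ba: "B = {a}"
      proof -
        have "insert ?n B - {?n} = {a, ?n} - {?n}" using iB by simp
        then show ?thesis using nB at(2) by auto
      qed
      obtain d where d: "d \<in> D" "F = fst d" using at(3) by blast
      have dne: "d \<noteq> ?e"
      proof
        assume "d = ?e"
        then have "F = insert ?n B" using d(2) by simp
        then show False using at(5) iB by simp
      qed
      have "d \<in> insert ?e (C - {(B, s)})" using d(1) DD by simp
      then have "d \<in> C - {(B, s)}" using dne by simp
      then have dC: "d \<in> C" "d \<noteq> (B, s)" by simp_all
      have FB: "F \<noteq> B"
      proof
        assume "F = B"
        then have "fst d = fst (B, s)" using d(2) by simp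
        then have "d = (B, s)" using inj_onD[OF inj _ dC(1) q(3)] by simp
        then show False using dC(2) by simp
      qed
      have FP: "F \<in> fst ` C" using dC(1) d(2) by simp
      have "a \<in> B" using Ba by simp
      from lp_share[OF lp BP FP FB[symmetric] this at(4)] show False using Ba by simp
    qed
    show "D \<in> {C\<in>Lset ?n m. ({?n}, id) \<notin> C \<and> \<not> has2 ?n C}"
      using v(1) DD sc nid nh unfolding Lset_def by simp
  next
    fix D assume "D \<in> {C\<in>Lset ?n m. ({?n}, id) \<notin> C \<and> \<not> has2 ?n C}"
    then have lc: "linked_cycle ?n D" and ck: "card (singly_covered_minimal (fst ` D)) = m"
      and nid: "({?n}, id) \<notin> D" and nh: "\<not> has2 ?n D" unfolding Lset_def by auto
    obtain c where c: "c \<in> D" "?n \<in> fst c" using top_block(1)[OF lc] by blast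
    obtain B t where Bt: "c = (B, t)" by force
    have BtD: "(B, t) \<in> D" and nB: "?n \<in> B" using c Bt by auto
    have Bn: "B \<noteq> {?n}"
    proof
      assume "B = {?n}"
      then have "t = id" using lc_parts(3)[OF lc BtD] cyc_single by simp
      then show False using nid BtD \<open>B = {?n}\<close> by simp
    qed
    have nb2: "\<not> (\<exists>a. B = {a, ?n} \<and> a \<noteq> ?n \<and> (\<exists>F\<in>fst ` D. a \<in> F \<and> F \<noteq> {a, ?n}))"
    proof
      assume "\<exists>a. B = {a, ?n} \<and> a \<noteq> ?n \<and> (\<exists>F\<in>fst ` D. a \<in> F \<and> F \<noteq> {a, ?n})"
      then obtain a where "B = {a, ?n}" "a \<noteq> ?n" "\<exists>F\<in>fst ` D. a \<in> F \<and> F \<noteq> {a, ?n}" by blast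
      then have "has2 ?n D" unfolding has2_def using BtD by blast
      then show False using nh by simp
    qed
    define B0 where "B0 = B - {?n}"
    define s where "s = transpose ?n (t ?n) \<circ> t"
    note r = remB1[OF lc BtD nB Bn nb2, folded B0_def s_def]
    let ?C = "insert (B0, s) (D - {(B, t)})"
    let ?x = "inv t ?n"
    have inC: "(B0, s) \<in> ?C" by simp
    note v = ins1_valid[OF r(1) inC r(2)]
    have DD: "D = insert (insert ?n B0, s \<circ> transpose ?x ?n) (?C - {(B0, s)})" using r(3) by simp
    have "singly_covered_minimal (fst ` D) = singly_covered_minimal (fst ` insert (insert ?n B0, s \<circ> transpose ?x ?n) (?C - {(B0, s)}))"
      by (rule arg_cong[where f="\<lambda>X. singly_covered_minimal (fst ` X)"], rule DD)
    also have "\<dots> = singly_covered_minimal (fst ` ?C)" by (rule v(2))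
    finally have "card (singly_covered_minimal (fst ` ?C)) = m" using ck by simp
    then have "(?C, ((B0, s), ?x)) \<in> ?Dom" using r(1,2) inC unfolding Lset_def by simp
    moreover have "D = Phi1 ?n (?C, ((B0, s), ?x))" using DD by (simp add: Phi1_simp)
    ultimately show "D \<in> Phi1 ?n ` ?Dom" by blast
  qed
qed

lemma recur:
  "f_lc (Suc N) (Suc k) = f_lc N k + (2 * N - Suc k) * f_lc N (Suc k)"
proof -
  let ?n = "Suc N"
  let ?m = "Suc k"
  let ?L = "Lset ?n ?m"
  let ?A = "{C\<in>Lset ?n ?m. ({?n}, id) \<in> C}"
  let ?B2 = "{C\<in>Lset ?n ?m. ({?n}, id) \<notin> C \<and> has2 ?n C}"
  let ?B1 = "{C\<in>Lset ?n ?m. ({?n}, id) \<notin> C \<and> \<not> has2 ?n C}"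
  have fL: "finite ?L" by (rule Lset_finite)
  have fA: "finite ?A" "finite ?B2" "finite ?B1" using fL by auto
  have Leq: "?L = ?A \<union> (?B2 \<union> ?B1)" by blast
  have "card ?L = card ?A + card (?B2 \<union> ?B1)"
    by (subst Leq, rule card_Un_disjoint) (use fA in auto)
  also have "card (?B2 \<union> ?B1) = card ?B2 + card ?B1"
    by (rule card_Un_disjoint) (use fA in auto)
  finally have c0: "card ?L = card ?A + card ?B2 + card ?B1" by (simp only: add.assoc)
  have cA: "card ?A = card (Lset N k)" by (rule bij_betw_same_card[OF bijA, symmetric])
  have fLN: "finite (Lset N ?m)" by (rule Lset_finite)
  have lcN: "linked_cycle N C" if "C \<in> Lset N ?m" for C using that unfolding Lset_def by simp
  have fSn: "finite (Sn (fst ` C))" if "C \<in> Lset N ?m" for C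
    using Sn_sub[OF lc_parts(1)[OF lcN[OF that]]] finite_subset by blast
  have fSig: "finite (SIGMA c:C. fst c)" if "C \<in> Lset N ?m" for C
    using lc_finite[OF lcN[OF that]] by (intro finite_SigmaI) auto
  have cB2: "card ?B2 = (\<Sum>C\<in>Lset N ?m. card (Sn (fst ` C)))"
  proof -
    have "card ?B2 = card (SIGMA C:Lset N ?m. Sn (fst ` C))" by (rule bij_betw_same_card[OF bijB2, symmetric])
    also have "\<dots> = (\<Sum>C\<in>Lset N ?m. card (Sn (fst ` C)))" by (rule card_SigmaI[OF fLN]) (use fSn in blast)
    finally show ?thesis .
  qed
  have cB1: "card ?B1 = (\<Sum>C\<in>Lset N ?m. card (SIGMA c:C. fst c))"
  proof -
    have "card ?B1 = card (SIGMA C:Lset N ?m. (SIGMA c:C. fst c))" by (rule bij_betw_same_card[OF bijB1, symmetric])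
    also have "\<dots> = (\<Sum>C\<in>Lset N ?m. card (SIGMA c:C. fst c))" by (rule card_SigmaI[OF fLN]) (use fSig in blast)
    finally show ?thesis .
  qed
  have "card ?B2 + card ?B1 = (\<Sum>C\<in>Lset N ?m. card (SIGMA c:C. fst c) + card (Sn (fst ` C)))"
    unfolding cB2 cB1 by (simp add: sum.distrib)
  also have "\<dots> = (\<Sum>C\<in>Lset N ?m. 2 * N - ?m)"
  proof (rule sum.cong[OF refl])
    fix C assume C: "C \<in> Lset N ?m"
    have "card (singly_covered_minimal (fst ` C)) = ?m" using C unfolding Lset_def by simp
    then show "card (SIGMA c:C. fst c) + card (Sn (fst ` C)) = 2 * N - ?m"
      using count_tags[OF lcN[OF C]] by simp
  qed
  also have "\<dots> = (2 * N - ?m) * card (Lset N ?m)" by simp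
  finally show ?thesis unfolding f_Lset using c0 cA by simp
qed

lemma f00: "f_lc 0 0 = 1"
proof -
  have "Lset 0 0 = {{}}"
  proof (intro equalityI subsetI)
    fix C assume "C \<in> Lset 0 0"
    then have lc: "linked_cycle 0 C" unfolding Lset_def by simp
    have lp: "linked_partition 0 (fst ` C)" using lc_parts[OF lc] by simp
    have "C = {}"
    proof (rule ccontr)
      assume "C \<noteq> {}"
      then obtain c where "c \<in> C" by blast
      then have "fst c \<in> fst ` C" by simp
      from lp_block(1,2)[OF lp this] show False by auto
    qed
    then show "C \<in> {{}}" by simp
  next
    fix C :: "(nat set \<times> (nat \<Rightarrow> nat)) set" assume "C \<in> {{}}"
    then have "C = {}" by simp
    moreover have "linked_cycle 0 {}" unfolding linked_cycle_def linked_partition_def by simp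
    moreover have "singly_covered_minimal {} = {}" unfolding singly_covered_minimal_def by simp
    ultimately show "C \<in> Lset 0 0" unfolding Lset_def by simp
  qed
  then show ?thesis unfolding f_Lset by simp
qed

lemma f_big:
  assumes "n < m"
  shows "f_lc n m = 0"
proof -
  have "Lset n m = {}"
  proof (rule ccontr)
    assume "Lset n m \<noteq> {}"
    then obtain C where "C \<in> Lset n m" by blast
    then have lc: "linked_cycle n C" and c: "card (singly_covered_minimal (fst ` C)) = m"
      unfolding Lset_def by auto
    have "card (singly_covered_minimal (fst ` C)) \<le> card {1..n}"
      using scm_sub[OF lc_parts(1)[OF lc]] by (rule card_mono[rotated]) simp
    then show False using c assms by simp
  qed
  then show ?thesis unfolding f_Lset by simp
qed

lemma min_one:
  assumes lp: "linked_partition n P" and BP: "B \<in> P" and B1: "1 \<in> B"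
  shows "Min B = 1"
proof -
  have "Min B \<le> 1" using Min_le[OF lp_block(3)[OF lp BP] B1] .
  moreover have "Min B \<ge> 1" using lp_block(2,4)[OF lp BP] by auto
  ultimately show ?thesis by simp
qed

lemma f_n0:
  assumes "1 \<le> n"
  shows "f_lc n 0 = 0"
proof -
  have "Lset n 0 = {}"
  proof (rule ccontr)
    assume "Lset n 0 \<noteq> {}"
    then obtain C where "C \<in> Lset n 0" by blast
    then have lc: "linked_cycle n C" and c: "card (singly_covered_minimal (fst ` C)) = 0"
      unfolding Lset_def by auto
    let ?P = "fst ` C"
    have lp: "linked_partition n ?P" using lc_parts[OF lc] by simp
    have "\<Union>?P = {1..n}" using lp unfolding linked_partition_def by simp
    then have "1 \<in> \<Union>?P" using assms by simp
    then obtain B where B: "B \<in> ?P" "1 \<in> B" by blast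
    have mB: "Min B = 1" using min_one[OF lp B] .
    have "\<forall>B'\<in>?P. 1 \<in> B' \<longrightarrow> B' = B"
    proof (intro ballI impI)
      fix B' assume B': "B' \<in> ?P" "1 \<in> B'"
      have mB': "Min B' = 1" using min_one[OF lp B'] .
      show "B' = B"
      proof (rule ccontr)
        assume "B' \<noteq> B"
        from lp_share[OF lp B(1) B'(1) this[symmetric] B(2) B'(2)] show False using mB mB' by simp
      qed
    qed
    then have w: "1 = Min B \<and> (\<forall>B'\<in>?P. 1 \<in> B' \<longrightarrow> B' = B)" using mB by (intro conjI) simp_all
    have "\<exists>B\<in>?P. 1 = Min B \<and> (\<forall>B'\<in>?P. 1 \<in> B' \<longrightarrow> B' = B)" using bexI[where x=B and P="\<lambda>X. 1 = Min X \<and> (\<forall>B'\<in>?P. 1 \<in> B' \<longrightarrow> B' = X)", OF w B(1)] .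
    then have "1 \<in> singly_covered_minimal ?P" unfolding singly_covered_minimal_def by (rule CollectI)
    moreover have "finite (singly_covered_minimal ?P)"
      using scm_sub[OF lp] finite_subset by blast
    ultimately show False using c by simp
  qed
  then show ?thesis unfolding f_Lset by simp
qed

lemma f11: "f_lc 1 1 = 1"
  using recur[of 0 0] f00 by simp

lemma diag: "f_lc (Suc k) (Suc k) = 1"
proof (induction k)
  case 0 then show ?case using f11 by simp
next
  case (Suc k)
  have r: "f_lc (Suc (Suc k)) (Suc (Suc k)) = f_lc (Suc k) (Suc k) + (2 * Suc k - Suc (Suc k)) * f_lc (Suc k) (Suc (Suc k))"
    by (rule recur)
  have z: "f_lc (Suc k) (Suc (Suc k)) = 0" by (rule f_big) simp
  show ?case using r z Suc by simp
qed

definition Fc :: "nat \<Rightarrow> nat \<Rightarrow> real" where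
  "Fc j k = fact (k + 2 * j) / (2 ^ j * fact k * fact j)"

lemma Fc_mul: "Fc j k * (2 ^ j * fact k * fact j) = fact (k + 2 * j)"
  unfolding Fc_def by simp

lemma Fc_base_step: "(2 * real j + 1) * Fc j 0 = Fc (Suc j) 0"
proof -
  define D where "D = (2::real) ^ Suc j * fact 0 * fact (Suc j)"
  have D0: "D \<noteq> 0" unfolding D_def by simp
  have d: "D = (2 * (real j + 1)) * (2 ^ j * fact 0 * fact j)"
    unfolding D_def by (simp add: fact_Suc algebra_simps)
  have X: "(fact (0 + 2 * Suc j) :: real) = (2 * real j + 2) * ((2 * real j + 1) * fact (0 + 2 * j))"
    by (simp add: fact_Suc algebra_simps)
  have "((2 * real j + 1) * Fc j 0) * D = (2 * real j + 1) * (2 * (real j + 1)) * (Fc j 0 * (2 ^ j * fact 0 * fact j))"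
    unfolding d by (simp add: algebra_simps)
  also have "\<dots> = (2 * real j + 1) * (2 * (real j + 1)) * fact (0 + 2 * j)" by (simp only: Fc_mul)
  also have "\<dots> = fact (0 + 2 * Suc j)" unfolding X by (simp add: algebra_simps)
  also have "\<dots> = Fc (Suc j) 0 * D" unfolding D_def by (simp only: Fc_mul)
  finally show ?thesis using D0 by simp
qed

lemma Fc_step:
  "Fc (Suc j) k + real (k + 2 * j + 2) * Fc j (Suc k) = Fc (Suc j) (Suc k)"
proof -
  define D where "D = (2::real) ^ Suc j * fact (Suc k) * fact (Suc j)"
  have D0: "D \<noteq> 0" unfolding D_def by simp
  have d1: "D = (real k + 1) * (2 ^ Suc j * fact k * fact (Suc j))"
    unfolding D_def by (simp add: fact_Suc algebra_simps)
  have d2: "D = (2 * (real j + 1)) * (2 ^ j * fact (Suc k) * fact j)"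
    unfolding D_def by (simp add: fact_Suc algebra_simps)
  define X where "X = (fact (k + 2 * j) :: real)"
  have a1: "(fact (k + 2 * Suc j) :: real) = (real k + 2 * real j + 2) * ((real k + 2 * real j + 1) * X)"
    unfolding X_def by (simp add: fact_Suc algebra_simps)
  have a2: "(fact (Suc k + 2 * j) :: real) = (real k + 2 * real j + 1) * X"
    unfolding X_def by (simp add: fact_Suc algebra_simps)
  have a3: "(fact (Suc k + 2 * Suc j) :: real) = (real k + 2 * real j + 3) * ((real k + 2 * real j + 2) * ((real k + 2 * real j + 1) * X))"
    unfolding X_def by (simp add: fact_Suc algebra_simps)
  have "(Fc (Suc j) k + real (k + 2 * j + 2) * Fc j (Suc k)) * D
      = Fc (Suc j) k * D + real (k + 2 * j + 2) * (Fc j (Suc k) * D)"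
    by (simp add: algebra_simps)
  also have "Fc (Suc j) k * D = (real k + 1) * (Fc (Suc j) k * (2 ^ Suc j * fact k * fact (Suc j)))"
    unfolding d1 by (simp add: algebra_simps)
  also have "\<dots> = (real k + 1) * fact (k + 2 * Suc j)" by (simp only: Fc_mul)
  also have "Fc j (Suc k) * D = (2 * (real j + 1)) * (Fc j (Suc k) * (2 ^ j * fact (Suc k) * fact j))"
    unfolding d2 by (simp add: algebra_simps)
  also have "\<dots> = (2 * (real j + 1)) * fact (Suc k + 2 * j)" by (simp only: Fc_mul)
  also have "(real k + 1) * fact (k + 2 * Suc j) + real (k + 2 * j + 2) * ((2 * (real j + 1)) * fact (Suc k + 2 * j))
      = (fact (Suc k + 2 * Suc j) :: real)"
    unfolding a1 a2 a3 by (simp add: algebra_simps)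
  also have "\<dots> = Fc (Suc j) (Suc k) * D" unfolding D_def by (simp only: Fc_mul)
  finally show ?thesis using D0 by simp
qed

lemma Fc_T: "(real k + 1) * Fc j (Suc k) = (real k + 2 * real j + 1) * Fc j k"
proof -
  define D where "D = (2::real) ^ j * fact k * fact j"
  have D0: "D \<noteq> 0" unfolding D_def by simp
  have d: "(2::real) ^ j * fact (Suc k) * fact j = (real k + 1) * D"
    unfolding D_def by (simp add: fact_Suc algebra_simps)
  have a2: "(fact (Suc k + 2 * j) :: real) = (real k + 2 * real j + 1) * fact (k + 2 * j)"
    by (simp add: fact_Suc algebra_simps)
  have "((real k + 1) * Fc j (Suc k)) * D = Fc j (Suc k) * ((real k + 1) * D)" by (simp add: algebra_simps)
  also have "\<dots> = fact (Suc k + 2 * j)" unfolding d[symmetric] by (simp only: Fc_mul)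
  also have "\<dots> = (real k + 2 * real j + 1) * (Fc j k * D)" unfolding a2 D_def by (simp only: Fc_mul)
  finally have "((real k + 1) * Fc j (Suc k)) * D = ((real k + 2 * real j + 1) * Fc j k) * D"
    by (simp only: mult.assoc)
  then show ?thesis using D0 mult_right_cancel by blast
qed

lemma CF: "real (f_lc (Suc (k + j)) (Suc k)) = Fc j k"
proof (induction j arbitrary: k)
  case 0
  show ?case using diag[of k] unfolding Fc_def by simp
next
  case (Suc j)
  note outer = Suc.IH
  show ?case
  proof (induction k)
    case 0
    have r: "f_lc (Suc (Suc j)) (Suc 0) = f_lc (Suc j) 0 + (2 * Suc j - Suc 0) * f_lc (Suc j) (Suc 0)"
      by (rule recur)
    have z: "f_lc (Suc j) 0 = 0" by (rule f_n0) simp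
    have e: "f_lc (Suc (Suc j)) (Suc 0) = (2 * j + 1) * f_lc (Suc j) (Suc 0)" using r z by simp
    have o: "real (f_lc (Suc j) (Suc 0)) = Fc j 0" using outer[of 0] by simp
    have "real (f_lc (Suc (Suc j)) (Suc 0)) = (2 * real j + 1) * Fc j 0"
      using e o by (simp add: algebra_simps)
    also have "\<dots> = Fc (Suc j) 0" by (rule Fc_base_step)
    finally show ?case by simp
  next
    case (Suc k)
    note inner = Suc.IH
    let ?N = "Suc (Suc (k + j))"
    have r: "f_lc (Suc ?N) (Suc (Suc k)) = f_lc ?N (Suc k) + (2 * ?N - Suc (Suc k)) * f_lc ?N (Suc (Suc k))"
      by (rule recur)
    have c: "2 * ?N - Suc (Suc k) = k + 2 * j + 2" by simp
    have e: "f_lc (Suc ?N) (Suc (Suc k)) = f_lc ?N (Suc k) + (k + 2 * j + 2) * f_lc ?N (Suc (Suc k))"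
      using r unfolding c .
    have i1: "real (f_lc ?N (Suc k)) = Fc (Suc j) k" using inner by simp
    have i2: "real (f_lc ?N (Suc (Suc k))) = Fc j (Suc k)" using outer[of "Suc k"] by simp
    have "real (f_lc (Suc ?N) (Suc (Suc k))) = Fc (Suc j) k + real (k + 2 * j + 2) * Fc j (Suc k)"
      unfolding e of_nat_add of_nat_mult i1 i2 ..
    also have "\<dots> = Fc (Suc j) (Suc k)" by (rule Fc_step)
    finally show ?case by simp
  qed
qed

lemma T_main:
  assumes "2 \<le> n" "1 \<le> m"
  shows "f_lc n m = m * f_lc n (m + 1) + f_lc (n - 1) (m - 1)"
proof -
  obtain N where N: "n = Suc N" using assms(1) by (cases n) auto
  obtain k where k: "m = Suc k" using assms(2) by (cases m) auto
  have r: "f_lc (Suc N) (Suc k) = f_lc N k + (2 * N - Suc k) * f_lc N (Suc k)" by (rule recur)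
  have key: "Suc k * f_lc (Suc N) (Suc (Suc k)) = (2 * N - Suc k) * f_lc N (Suc k)"
  proof (cases "N \<le> k")
    case True
    have "f_lc (Suc N) (Suc (Suc k)) = 0" by (rule f_big) (use True in simp)
    moreover have "f_lc N (Suc k) = 0" by (rule f_big) (use True in simp)
    ultimately show ?thesis by simp
  next
    case False
    define j where "j = N - Suc k"
    have Nj: "N = Suc (k + j)" using False unfolding j_def by simp
    have c1: "real (f_lc (Suc N) (Suc (Suc k))) = Fc j (Suc k)"
      using CF[of "Suc k" j] Nj by simp
    have c2: "real (f_lc N (Suc k)) = Fc j k" using CF[of k j] Nj by simp
    have c3: "2 * N - Suc k = k + 2 * j + 1" using Nj by simp
    have "real (Suc k * f_lc (Suc N) (Suc (Suc k))) = (real k + 1) * Fc j (Suc k)"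
      using c1 by (simp add: algebra_simps)
    also have "\<dots> = (real k + 2 * real j + 1) * Fc j k" by (rule Fc_T)
    also have "\<dots> = real ((2 * N - Suc k) * f_lc N (Suc k))" using c2 c3 by (simp add: algebra_simps)
    finally show ?thesis by (simp only: of_nat_eq_iff)
  qed
  show ?thesis unfolding N k using r key by simp
qed

theorem proposition4p6:
  shows "f_lc 1 1 = 1 \<and>
         (\<forall>n::nat. n \<ge> 1 \<longrightarrow> f_lc n 0 = 0) \<and>
         (\<forall>n m::nat. n < m \<longrightarrow> f_lc n m = 0) \<and>
         (\<forall>n m::nat. n \<ge> 2 \<longrightarrow> m \<ge> 1 \<longrightarrow>
             f_lc n m = m * f_lc n (m + 1) + f_lc (n - 1) (m - 1))"
  using f11 f_n0 f_big T_main by blast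


end
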